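(* Let $(M,\mathbf g)$ be a $(d+1)$-dimensional spacetime carrying a steady perfect fluid flow with respect to a timelike Killing vector field $\boldsymbol\xi$ on a neighborhood $U$ of a point $p$, with fluid variables of class $C^2$ near $p$. Suppose that $p$ is a sonic point and that the expansion $\Theta$ of the streamline congruence does not vanish at $p$. Then $v_{\rm s}(p)=1/\sqrt d$ if and only if $\boldsymbol\sigma(\bar{\boldsymbol\xi},\bar{\boldsymbol\xi})|_p=0$, where $\boldsymbol\sigma$ is the shear tensor of the streamline congruence.
   Context: A perfect fluid on a $(d+1)$-dimensional Lorentzian spacetime $(M,\mathbf g)$ consists of positive functions $n,h,P,s,T$ (number density, specific enthalpy, pressure, specific entropy, temperature) and a vector field $\mathbf u$ with $\mathbf u\cdot\mathbf u=-1$, satisfying $\mathbf d h=T\,\mathbf d s+n^{-1}\mathbf d P$, $\nabla\cdot(n\mathbf u)=0$, $\nabla\cdot(nh\,\mathbf u\otimes\mathbf u+P\,\mathbf g^{-1})=0$, and an equation of state $h=h(P,s)$ with speed of sound $v_{\rm s}$, $v_{\rm s}^2=(\partial\ln h/\partial\ln n)_s\in(0,1)$. The flow is steady with respect to the timelike Killing field $\boldsymbol\xi$ on $U$ if $\mathcal L_{\boldsymbol\xi}P=\mathcal L_{\boldsymbol\xi}s=0$, $\mathcal L_{\boldsymbol\xi}\mathbf u=0$. Set $\bar{\boldsymbol\xi}=\boldsymbol\xi/\sqrt{|\boldsymbol\xi\cdot\boldsymbol\xi|}$ and write $\mathbf u=(1-v^2)^{-1/2}(\bar{\boldsymbol\xi}+v\bar{\boldsymbol\eta})$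 with $v\in[0,1)$ and $\bar{\boldsymbol\eta}$ unit spacelike orthogonal to $\bar{\boldsymbol\xi}$, with $\mathcal L_{\boldsymbol\xi}\bar{\boldsymbol\eta}=0$; integral curves of $\bar{\boldsymbol\eta}$ are the streamlines. Let $B_{\mu\nu}=\nabla_\mu\bar\eta_\nu$, $\mathbf a=\nabla_{\bar{\boldsymbol\eta}}\bar{\boldsymbol\eta}$, $\mathbf g^\perp=\mathbf g-\bar{\boldsymbol\eta}^\flat\otimes\bar{\boldsymbol\eta}^\flat$, and decompose $\mathbf B-\bar{\boldsymbol\eta}^\flat\otimes\mathbf a^\flat=\frac{\Theta}{d}\mathbf g^\perp+\boldsymbol\sigma+\boldsymbol\omega$, where $\Theta=\nabla\cdot\bar{\boldsymbol\eta}$ (expansion), $\boldsymbol\sigma$ is symmetric and trace-free (shear) and $\boldsymbol\omega$ is antisymmetric (vorticity). A sonic point is a point $p$ with $v(p)=v_{\rm s}(p)$. *)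

theory Defs
  imports "HOL-Analysis.Analysis"
begin

text \<open>Local-coordinate (chart) formulation. Spacetime points are coordinates
  x :: real^'n, with CARD('n) = d+1. Vectors/covectors are given by their
  components; the metric by its component matrix g x.\<close>

fun Ck :: "nat \<Rightarrow> 'a::euclidean_space set \<Rightarrow> ('a \<Rightarrow> real) \<Rightarrow> bool" where
  "Ck 0 U f = continuous_on U f"
| "Ck (Suc k) U f = ((\<forall>x\<in>U. f differentiable (at x)) \<and>
      (\<forall>b\<in>Basis. Ck k U (\<lambda>x. frechet_derivative f (at x) b)))"

definition smooth_fn :: "'a::euclidean_space set \<Rightarrow> ('a \<Rightarrow> real) \<Rightarrow> bool" where
  "smooth_fn U f = (\<forall>k. Ck k U f)"

definition Ck_vec :: "nat \<Rightarrow> (real^'n) set \<Rightarrow> (real^'n \<Rightarrow> real^'n) \<Rightarrow> bool" where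
  "Ck_vec k U X = (\<forall>i. Ck k U (\<lambda>x. X x $ i))"

definition smooth_vec :: "(real^'n) set \<Rightarrow> (real^'n \<Rightarrow> real^'n) \<Rightarrow> bool" where
  "smooth_vec U X = (\<forall>i. smooth_fn U (\<lambda>x. X x $ i))"

definition smooth_metric :: "(real^'n) set \<Rightarrow> (real^'n \<Rightarrow> real^'n^'n) \<Rightarrow> bool" where
  "smooth_metric U g = (\<forall>i j. smooth_fn U (\<lambda>x. g x $ i $ j))"

definition pd :: "(real^'n \<Rightarrow> real) \<Rightarrow> 'n \<Rightarrow> real^'n \<Rightarrow> real" where
  "pd f i x = frechet_derivative f (at x) (axis i 1)"

definition quad :: "real^'n^'n \<Rightarrow> real^'n \<Rightarrow> real^'n \<Rightarrow> real" where
  "quad G X Y = (\<Sum>i\<in>UNIV. \<Sum>j\<in>UNIV. G $ i $ j * X $ i * Y $ j)"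

text \<open>Lorentzian signature (-,+,...,+): symmetric, some timelike vector, and the
  form is positive definite on the orthogonal complement of any timelike vector.\<close>
definition lorentzian :: "real^'n^'n \<Rightarrow> bool" where
  "lorentzian G = ((\<forall>i j. G $ i $ j = G $ j $ i) \<and> (\<exists>t. quad G t t < 0) \<and>
     (\<forall>t w. quad G t t < 0 \<longrightarrow> quad G t w = 0 \<longrightarrow> w \<noteq> 0 \<longrightarrow> quad G w w > 0))"

definition lower :: "(real^'n \<Rightarrow> real^'n^'n) \<Rightarrow> (real^'n \<Rightarrow> real^'n) \<Rightarrow> real^'n \<Rightarrow> real^'n" where
  "lower g X x = (\<chi> i. \<Sum>j\<in>UNIV. g x $ i $ j * X x $ j)"

definition christ :: "(real^'n \<Rightarrow> real^'n^'n) \<Rightarrow> 'n \<Rightarrow> 'n \<Rightarrow> 'n \<Rightarrow> real^'n \<Rightarrow> real" where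
  "christ g k i j x = (1/2) * (\<Sum>l\<in>UNIV. matrix_inv (g x) $ k $ l *
      (pd (\<lambda>y. g y $ l $ j) i x + pd (\<lambda>y. g y $ l $ i) j x - pd (\<lambda>y. g y $ i $ j) l x))"

definition cov_vec :: "(real^'n \<Rightarrow> real^'n^'n) \<Rightarrow> (real^'n \<Rightarrow> real^'n) \<Rightarrow> 'n \<Rightarrow> 'n \<Rightarrow> real^'n \<Rightarrow> real" where
  "cov_vec g X i k x = pd (\<lambda>y. X y $ k) i x + (\<Sum>j\<in>UNIV. christ g k i j x * X x $ j)"

definition cov_covec :: "(real^'n \<Rightarrow> real^'n^'n) \<Rightarrow> (real^'n \<Rightarrow> real^'n) \<Rightarrow> 'n \<Rightarrow> 'n \<Rightarrow> real^'n \<Rightarrow> real" where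
  "cov_covec g w i j x = pd (\<lambda>y. w y $ j) i x - (\<Sum>l\<in>UNIV. christ g l i j x * w x $ l)"

definition divergence :: "(real^'n \<Rightarrow> real^'n^'n) \<Rightarrow> (real^'n \<Rightarrow> real^'n) \<Rightarrow> real^'n \<Rightarrow> real" where
  "divergence g X x = (\<Sum>i\<in>UNIV. cov_vec g X i i x)"

definition div_tensor :: "(real^'n \<Rightarrow> real^'n^'n) \<Rightarrow> (real^'n \<Rightarrow> real^'n^'n) \<Rightarrow> 'n \<Rightarrow> real^'n \<Rightarrow> real" where
  "div_tensor g T \<nu> x = (\<Sum>\<mu>\<in>UNIV. pd (\<lambda>y. T y $ \<mu> $ \<nu>) \<mu> x
      + (\<Sum>\<kappa>\<in>UNIV. christ g \<mu> \<mu> \<kappa> x * T x $ \<kappa> $ \<nu>)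
      + (\<Sum>\<kappa>\<in>UNIV. christ g \<nu> \<mu> \<kappa> x * T x $ \<mu> $ \<kappa>))"

definition killing_on :: "(real^'n \<Rightarrow> real^'n^'n) \<Rightarrow> (real^'n) set \<Rightarrow> (real^'n \<Rightarrow> real^'n) \<Rightarrow> bool" where
  "killing_on g U \<xi> = (\<forall>x\<in>U. \<forall>i j. cov_covec g (lower g \<xi>) i j x + cov_covec g (lower g \<xi>) j i x = 0)"

definition lie_scalar :: "(real^'n \<Rightarrow> real^'n) \<Rightarrow> (real^'n \<Rightarrow> real) \<Rightarrow> real^'n \<Rightarrow> real" where
  "lie_scalar X f x = (\<Sum>\<mu>\<in>UNIV. X x $ \<mu> * pd f \<mu> x)"

definition lie_vec :: "(real^'n \<Rightarrow> real^'n) \<Rightarrow> (real^'n \<Rightarrow> real^'n) \<Rightarrow> real^'n \<Rightarrow> real^'n" where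
  "lie_vec X Y x = (\<chi> k. \<Sum>\<mu>\<in>UNIV. X x $ \<mu> * pd (\<lambda>y. Y y $ k) \<mu> x - Y x $ \<mu> * pd (\<lambda>y. X y $ k) \<mu> x)"

text \<open>(\<partial> ln h / \<partial> ln n)_s for state functions h = H(P,s), n = N(P,s):
  written out by the chain rule as (n/h) (\<partial>_P H)/(\<partial>_P N) at fixed s.\<close>
definition sound_speed_sq :: "(real \<Rightarrow> real \<Rightarrow> real) \<Rightarrow> (real \<Rightarrow> real \<Rightarrow> real) \<Rightarrow> real \<Rightarrow> real \<Rightarrow> real" where
  "sound_speed_sq H N P s = (N P s / H P s) * deriv (\<lambda>q. H q s) P / deriv (\<lambda>q. N q s) P"

definition eos :: "(real \<times> real) set \<Rightarrow> (real \<Rightarrow> real \<Rightarrow> real) \<Rightarrow> (real \<Rightarrow> real \<Rightarrow> real)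
     \<Rightarrow> (real \<Rightarrow> real \<Rightarrow> real) \<Rightarrow> bool" where
  "eos D H N Tm = (open D \<and>
     Ck 2 D (\<lambda>z. H (fst z) (snd z)) \<and> Ck 2 D (\<lambda>z. N (fst z) (snd z)) \<and> Ck 2 D (\<lambda>z. Tm (fst z) (snd z)) \<and>
     (\<forall>P s. (P, s) \<in> D \<longrightarrow>
        P > 0 \<and> H P s > 0 \<and> N P s > 0 \<and> Tm P s > 0 \<and>
        ((\<lambda>q. H q s) has_real_derivative (1 / N P s)) (at P) \<and>
        ((\<lambda>r. H P r) has_real_derivative (Tm P s)) (at s) \<and>
        deriv (\<lambda>q. N q s) P \<noteq> 0 \<and>
        0 < sound_speed_sq H N P s \<and> sound_speed_sq H N P s < 1))"

definition normalize_field :: "(real^'n \<Rightarrow> real^'n^'n) \<Rightarrow> (real^'n \<Rightarrow> real^'n) \<Rightarrow> real^'n \<Rightarrow> real^'n" where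
  "normalize_field g \<xi> x = (1 / sqrt \<bar>quad (g x) (\<xi> x) (\<xi> x)\<bar>) *\<^sub>R \<xi> x"

definition expansion :: "(real^'n \<Rightarrow> real^'n^'n) \<Rightarrow> (real^'n \<Rightarrow> real^'n) \<Rightarrow> real^'n \<Rightarrow> real" where
  "expansion g \<eta> x = divergence g \<eta> x"

definition accel :: "(real^'n \<Rightarrow> real^'n^'n) \<Rightarrow> (real^'n \<Rightarrow> real^'n) \<Rightarrow> real^'n \<Rightarrow> real^'n" where
  "accel g \<eta> x = (\<chi> \<nu>. \<Sum>\<mu>\<in>UNIV. \<eta> x $ \<mu> * cov_vec g \<eta> \<mu> \<nu> x)"

definition Bred :: "(real^'n \<Rightarrow> real^'n^'n) \<Rightarrow> (real^'n \<Rightarrow> real^'n) \<Rightarrow> 'n \<Rightarrow> 'n \<Rightarrow> real^'n \<Rightarrow> real" where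
  "Bred g \<eta> \<mu> \<nu> x = cov_covec g (lower g \<eta>) \<mu> \<nu> x - lower g \<eta> x $ \<mu> * lower g (accel g \<eta>) x $ \<nu>"

definition gperp :: "(real^'n \<Rightarrow> real^'n^'n) \<Rightarrow> (real^'n \<Rightarrow> real^'n) \<Rightarrow> 'n \<Rightarrow> 'n \<Rightarrow> real^'n \<Rightarrow> real" where
  "gperp g \<eta> \<mu> \<nu> x = g x $ \<mu> $ \<nu> - lower g \<eta> x $ \<mu> * lower g \<eta> x $ \<nu>"

text \<open>shear: the symmetric trace-free part in
  B - \<eta>\<otimes>a = (\<Theta>/d) g^\<perp> + \<sigma> + \<omega>, i.e. \<sigma> = sym(B - \<eta>\<otimes>a) - (\<Theta>/d) g^\<perp>,
  where d + 1 = CARD('n).\<close>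
definition shear :: "(real^'n \<Rightarrow> real^'n^'n) \<Rightarrow> (real^'n \<Rightarrow> real^'n) \<Rightarrow> 'n \<Rightarrow> 'n \<Rightarrow> real^'n \<Rightarrow> real" where
  "shear g \<eta> \<mu> \<nu> x = (Bred g \<eta> \<mu> \<nu> x + Bred g \<eta> \<nu> \<mu> x) / 2
     - expansion g \<eta> x / (real CARD('n) - 1) * gperp g \<eta> \<mu> \<nu> x"

definition tensor_eval :: "('n \<Rightarrow> 'n \<Rightarrow> real) \<Rightarrow> real^'n \<Rightarrow> real^'n \<Rightarrow> real" where
  "tensor_eval S X Y = (\<Sum>\<mu>\<in>UNIV. \<Sum>\<nu>\<in>UNIV. S \<mu> \<nu> * X $ \<mu> * Y $ \<nu>)"

end

theory Submission
  imports Defs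
begin


lemma pd_has: "(f has_derivative f') (at x) \<Longrightarrow> pd f i x = f' (axis i 1)"
  unfolding pd_def by (metis frechet_derivative_at)

lemma dif_has: "f differentiable (at x) \<Longrightarrow> (f has_derivative frechet_derivative f (at x)) (at x)"
  using frechet_derivative_works by blast

lemma pd_mult:
  assumes "f differentiable (at x)" "g differentiable (at x)"
  shows "pd (\<lambda>y. f y * g y) i x = pd f i x * g x + f x * pd g i x"
proof -
  have "((\<lambda>y. f y * g y) has_derivative (\<lambda>h. f x * frechet_derivative g (at x) h + frechet_derivative f (at x) h * g x)) (at x)"
    using dif_has[OF assms(1)] dif_has[OF assms(2)] by (rule has_derivative_mult)
  from pd_has[OF this, of i] show ?thesis by (simp add: pd_def)
qed

lemma pd_add:
  assumes "f differentiable (at x)" "g differentiable (at x)"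
  shows "pd (\<lambda>y. f y + g y) i x = pd f i x + pd g i x"
proof -
  have "((\<lambda>y. f y + g y) has_derivative (\<lambda>h. frechet_derivative f (at x) h + frechet_derivative g (at x) h)) (at x)"
    using dif_has[OF assms(1)] dif_has[OF assms(2)] by (rule has_derivative_add)
  from pd_has[OF this, of i] show ?thesis by (simp add: pd_def)
qed

lemma pd_diff:
  assumes "f differentiable (at x)" "g differentiable (at x)"
  shows "pd (\<lambda>y. f y - g y) i x = pd f i x - pd g i x"
proof -
  have "((\<lambda>y. f y - g y) has_derivative (\<lambda>h. frechet_derivative f (at x) h - frechet_derivative g (at x) h)) (at x)"
    using dif_has[OF assms(1)] dif_has[OF assms(2)] by (rule has_derivative_diff)
  from pd_has[OF this, of i] show ?thesis by (simp add: pd_def)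
qed

lemma pd_sum:
  assumes "finite S" "\<forall>k\<in>S. F k differentiable (at x)"
  shows "pd (\<lambda>y. \<Sum>k\<in>S. F k y) i x = (\<Sum>k\<in>S. pd (F k) i x)"
proof -
  have "((\<lambda>y. \<Sum>k\<in>S. F k y) has_derivative (\<lambda>h. \<Sum>k\<in>S. frechet_derivative (F k) (at x) h)) (at x)"
    using assms by (intro has_derivative_sum) (auto intro: dif_has)
  from pd_has[OF this, of i] show ?thesis by (simp add: pd_def)
qed

lemma pd_const: "pd (\<lambda>y. c) i x = 0"
  by (rule pd_has[where f'="\<lambda>h. 0", simplified]) (rule has_derivative_const)

lemma pd_cmult:
  assumes "f differentiable (at x)"
  shows "pd (\<lambda>y. c * f y) i x = c * pd f i x"
  using pd_mult[of "\<lambda>y. c" x f i] assms by (simp add: pd_const)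

lemma pd_local:
  assumes "open U" "x \<in> U" "\<forall>y\<in>U. f y = g y"
  shows "pd f i x = pd g i x"
proof -
  have "\<And>f'. (f has_derivative f') (at x) \<longleftrightarrow> (g has_derivative f') (at x)"
    using assms by (metis has_derivative_transform_within_open)
  then have "frechet_derivative f (at x) = frechet_derivative g (at x)"
    unfolding frechet_derivative_def by simp
  then show ?thesis unfolding pd_def by simp
qed

lemma dif_local:
  assumes "open U" "x \<in> U" "\<forall>y\<in>U. f y = g y" "f differentiable (at x)"
  shows "g differentiable (at x)"
  using assms unfolding differentiable_def by (metis has_derivative_transform_within_open)


lemma differentiable_prod':
  fixes f :: "'i \<Rightarrow> 'a::real_normed_vector \<Rightarrow> real"
  assumes "\<forall>i\<in>I. f i differentiable (at x)"
  shows "(\<lambda>x. \<Prod>i\<in>I. f i x) differentiable (at x)"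
proof -
  from assms have "\<forall>i\<in>I. \<exists>D. (f i has_derivative D) (at x)" unfolding differentiable_def by blast
  from bchoice[OF this] obtain D where "\<forall>i\<in>I. (f i has_derivative D i) (at x)" by blast
  then have "((\<lambda>x. \<Prod>i\<in>I. f i x) has_derivative (\<lambda>y. \<Sum>i\<in>I. D i y * (\<Prod>j\<in>I - {i}. f j x))) (at x)"
    using has_derivative_prod[of I f D x UNIV] by blast
  then show ?thesis unfolding differentiable_def by blast
qed

lemma det_differentiable:
  fixes M :: "'a::real_normed_vector \<Rightarrow> real^'n^'n"
  assumes "\<forall>i j. (\<lambda>y. M y $ i $ j) differentiable (at x)"
  shows "(\<lambda>y. det (M y)) differentiable (at x)"
  unfolding det_def
proof (rule differentiable_sum)
  show "finite {p. p permutes (UNIV::'n set)}" by (simp add: finite_permutations)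
  show "\<forall>a\<in>{p. p permutes UNIV}. (\<lambda>y. of_int (sign a) * (\<Prod>i\<in>UNIV. M y $ i $ a i)) differentiable at x"
  proof
    fix a
    have "(\<lambda>y. \<Prod>i\<in>UNIV. M y $ i $ a i) differentiable at x"
      using assms by (intro differentiable_prod') auto
    then show "(\<lambda>y. of_int (sign a) * (\<Prod>i\<in>UNIV. M y $ i $ a i)) differentiable at x"
      by (intro differentiable_mult) auto
  qed
qed

lemma inv_facts:
  fixes A :: "real^'n^'n"
  assumes "invertible A"
  shows "A ** matrix_inv A = mat 1" "matrix_inv A ** A = mat 1"
proof -
  have "\<exists>A'. A ** A' = mat 1 \<and> A' ** A = mat 1" using assms unfolding invertible_def by blast
  then have "A ** matrix_inv A = mat 1 \<and> matrix_inv A ** A = mat 1"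
    unfolding matrix_inv_def by (rule someI_ex)
  then show "A ** matrix_inv A = mat 1" "matrix_inv A ** A = mat 1" by auto
qed

lemma lorentzian_invertible:
  fixes G :: "real^'n^'n"
  assumes "lorentzian G"
  shows "invertible G"
proof -
  from assms obtain t where t: "quad G t t < 0"
    and pos: "\<forall>t w. quad G t t < 0 \<longrightarrow> quad G t w = 0 \<longrightarrow> w \<noteq> 0 \<longrightarrow> quad G w w > 0"
    unfolding lorentzian_def by blast
  have "\<forall>w. G *v w = 0 \<longrightarrow> w = 0"
  proof (intro allI impI)
    fix w assume w: "G *v w = 0"
    have row: "\<And>i. (\<Sum>j\<in>UNIV. G $ i $ j * w $ j) = 0"
      using w by (simp add: matrix_vector_mult_def vec_eq_iff)
    have qz: "\<And>z. quad G z w = 0"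
    proof -
      fix z
      have "quad G z w = (\<Sum>i\<in>UNIV. z $ i * (\<Sum>j\<in>UNIV. G $ i $ j * w $ j))"
        unfolding quad_def by (simp add: sum_distrib_left algebra_simps)
      then show "quad G z w = 0" using row by simp
    qed
    show "w = 0"
    proof (rule ccontr)
      assume "w \<noteq> 0"
      then have "quad G w w > 0" using pos t qz[of t] by blast
      then show False using qz[of w] by simp
    qed
  qed
  then have "\<exists>B. B ** G = mat 1" using matrix_left_invertible_ker by blast
  then show ?thesis using invertible_left_inverse by blast
qed

lemma inv_sym:
  fixes A :: "real^'n^'n"
  assumes "invertible A" "\<forall>i j. A $ i $ j = A $ j $ i"
  shows "matrix_inv A $ i $ j = matrix_inv A $ j $ i"
proof -
  have tA: "transpose A = A" using assms(2) by (simp add: transpose_def vec_eq_iff)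
  have "transpose (A ** matrix_inv A) = transpose (matrix_inv A) ** transpose A"
    by (rule matrix_transpose_mul)
  then have 1: "transpose (matrix_inv A) ** A = mat 1"
    using inv_facts(1)[OF assms(1)] tA by (simp add: transpose_mat)
  have "transpose (matrix_inv A) = transpose (matrix_inv A) ** (A ** matrix_inv A)"
    using inv_facts(1)[OF assms(1)] by simp
  also have "\<dots> = (transpose (matrix_inv A) ** A) ** matrix_inv A" by (simp add: matrix_mul_assoc)
  also have "\<dots> = matrix_inv A" using 1 by simp
  finally have "transpose (matrix_inv A) = matrix_inv A" .
  then have "transpose (matrix_inv A) $ j $ i = matrix_inv A $ j $ i" by simp
  then show ?thesis by (simp add: transpose_def)
qed




lemma sum_delta_r: fixes f :: "'a::finite \<Rightarrow> real" shows "(\<Sum>b\<in>UNIV. f b * (if b = e then 1 else 0)) = (f e :: real)"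
proof -
  have "(\<Sum>b\<in>UNIV. f b * (if b = e then 1 else 0)) = (\<Sum>b\<in>UNIV. if b = e then f b else 0)"
    by (rule sum.cong) auto
  also have "\<dots> = f e" by (simp add: sum.delta)
  finally show ?thesis .
qed

lemma sum_delta_l: fixes f :: "'a::finite \<Rightarrow> real" shows "(\<Sum>b\<in>UNIV. (if e = b then 1 else 0) * f b) = (f e :: real)"
proof -
  have "(\<Sum>b\<in>UNIV. (if e = b then 1 else 0) * f b) = (\<Sum>b\<in>UNIV. if e = b then f b else 0)"
    by (rule sum.cong) auto
  also have "\<dots> = f e" by (simp add: sum.delta)
  finally show ?thesis .
qed

lemma mat_mult_entry: "(A ** B) $ i $ j = (\<Sum>k\<in>UNIV. A $ i $ k * B $ k $ j)"
  by (simp add: matrix_matrix_mult_def)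

lemma mat1_entry: "(mat 1 :: real^'n^'n) $ i $ j = (if i = j then 1 else 0)"
  by (simp add: mat_def)

lemma inv_entry_l:
  fixes A :: "real^'n^'n"
  assumes "invertible A"
  shows "(\<Sum>b\<in>UNIV. matrix_inv A $ a $ b * A $ b $ c) = (if a = c then 1 else 0)"
proof -
  have "(matrix_inv A ** A) $ a $ c = (mat 1 :: real^'n^'n) $ a $ c" using inv_facts(2)[OF assms] by simp
  then show ?thesis by (simp only: mat_mult_entry mat1_entry)
qed

lemma inv_entry_r:
  fixes A :: "real^'n^'n"
  assumes "invertible A"
  shows "(\<Sum>b\<in>UNIV. A $ a $ b * matrix_inv A $ b $ c) = (if a = c then 1 else 0)"
proof -
  have "(A ** matrix_inv A) $ a $ c = (mat 1 :: real^'n^'n) $ a $ c" using inv_facts(1)[OF assms] by simp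
  then show ?thesis by (simp only: mat_mult_entry mat1_entry)
qed

lemma cramer_inv:
  fixes A :: "real^'n^'n"
  assumes "invertible A"
  shows "matrix_inv A $ k $ j = det (\<chi> i l. if l = k then axis j 1 $ i else A $ i $ l) / det A"
proof -
  have d: "det A \<noteq> 0" using assms invertible_det_nz by blast
  let ?x = "(\<chi> k. matrix_inv A $ k $ j) :: real^'n"
  have "A *v ?x = axis j 1"
  proof -
    have "\<And>i. (A *v ?x) $ i = axis j 1 $ i"
    proof -
      fix i
      have "(A *v ?x) $ i = (\<Sum>b\<in>UNIV. A $ i $ b * matrix_inv A $ b $ j)"
        by (simp add: matrix_vector_mult_def)
      also have "\<dots> = (if i = j then 1 else 0)" by (rule inv_entry_r[OF assms])
      finally show "(A *v ?x) $ i = axis j 1 $ i" by (simp add: axis_def)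
    qed
    then show ?thesis by (simp add: vec_eq_iff)
  qed
  then have "?x = (\<chi> k. det(\<chi> i l. if l=k then axis j 1 $ i else A$i$l) / det A)"
    using cramer[OF d] by blast
  then have "?x $ k = (\<chi> k. det(\<chi> i l. if l=k then axis j 1 $ i else A$i$l) / det A) $ k" by simp
  then show ?thesis by simp
qed

definition dg :: "(real^'n \<Rightarrow> real^'n^'n) \<Rightarrow> real^'n \<Rightarrow> 'n \<Rightarrow> 'n \<Rightarrow> 'n \<Rightarrow> real" where
  "dg g x i a b = pd (\<lambda>y. g y $ a $ b) i x"

locale metric_pt =
  fixes g :: "real^'n \<Rightarrow> real^'n^'n" and U :: "(real^'n) set" and x :: "real^'n"
  assumes U: "open U" "x \<in> U"
    and lor: "\<forall>y\<in>U. lorentzian (g y)"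
    and gdif: "\<forall>i j. (\<lambda>y. g y $ i $ j) differentiable (at x)"
begin

abbreviation "G \<equiv> g x"
abbreviation "Gi \<equiv> matrix_inv (g x)"

lemma inv_U: "y \<in> U \<Longrightarrow> invertible (g y)"
  using lor lorentzian_invertible by blast

lemma sym_U: "y \<in> U \<Longrightarrow> g y $ i $ j = g y $ j $ i"
  using lor unfolding lorentzian_def by blast

lemma invG: "invertible G" using inv_U U by blast
lemma symG: "G $ i $ j = G $ j $ i" using sym_U U by blast
lemma symGi: "Gi $ i $ j = Gi $ j $ i" using inv_sym invG symG by blast

lemma GiG: "(\<Sum>b\<in>UNIV. Gi $ a $ b * G $ b $ c) = (if a = c then 1 else 0)"
  by (rule inv_entry_l[OF invG])
lemma GGi: "(\<Sum>b\<in>UNIV. G $ a $ b * Gi $ b $ c) = (if a = c then 1 else 0)"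
  by (rule inv_entry_r[OF invG])

lemma dg_sym: "dg g x i a b = dg g x i b a"
  unfolding dg_def by (rule pd_local[OF U]) (use sym_U in blast)

lemma Gidif: "(\<lambda>y. matrix_inv (g y) $ k $ j) differentiable (at x)"
proof -
  let ?f = "\<lambda>y. det (\<chi> i l. if l = k then axis j 1 $ i else g y $ i $ l) / det (g y)"
  have e: "\<forall>y\<in>U. ?f y = matrix_inv (g y) $ k $ j"
  proof
    fix y assume "y \<in> U"
    then have "invertible (g y)" by (rule inv_U)
    from cramer_inv[OF this] show "?f y = matrix_inv (g y) $ k $ j" by simp
  qed
  have d1: "(\<lambda>y. det (\<chi> i l. if l = k then axis j 1 $ i else g y $ i $ l)) differentiable (at x)"
  proof (rule det_differentiable, intro allI)
    fix i l
    show "(\<lambda>y. (\<chi> i l. if l = k then axis j 1 $ i else g y $ i $ l) $ i $ l) differentiable (at x)"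
      using gdif by (cases "l = k") auto
  qed
  have d2: "(\<lambda>y. det (g y)) differentiable (at x)"
    using gdif by (intro det_differentiable) auto
  have "det (g x) \<noteq> 0" using invG invertible_det_nz by blast
  then have "?f differentiable (at x)" using d1 d2 by (intro differentiable_divide) auto
  then show ?thesis using dif_local[OF U e] by blast
qed

lemma dGi_raw: "(\<Sum>b\<in>UNIV. pd (\<lambda>y. matrix_inv (g y) $ a $ b) i x * G $ b $ c)
   = - (\<Sum>b\<in>UNIV. Gi $ a $ b * dg g x i b c)"
proof -
  have e: "\<forall>y\<in>U. (\<Sum>b\<in>UNIV. matrix_inv (g y) $ a $ b * g y $ b $ c) = (if a = c then 1 else 0)"
    using inv_entry_l inv_U by blast
  have "pd (\<lambda>y. \<Sum>b\<in>UNIV. matrix_inv (g y) $ a $ b * g y $ b $ c) i x = pd (\<lambda>y. if a = c then 1 else 0) i x"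
    by (rule pd_local[OF U e])
  also have "\<dots> = 0" by (rule pd_const)
  finally have z: "pd (\<lambda>y. \<Sum>b\<in>UNIV. matrix_inv (g y) $ a $ b * g y $ b $ c) i x = 0" .
  have "pd (\<lambda>y. \<Sum>b\<in>UNIV. matrix_inv (g y) $ a $ b * g y $ b $ c) i x
      = (\<Sum>b\<in>UNIV. pd (\<lambda>y. matrix_inv (g y) $ a $ b * g y $ b $ c) i x)"
    using Gidif gdif by (intro pd_sum) auto
  also have "\<dots> = (\<Sum>b\<in>UNIV. pd (\<lambda>y. matrix_inv (g y) $ a $ b) i x * G $ b $ c + Gi $ a $ b * dg g x i b c)"
    using Gidif gdif by (intro sum.cong refl) (simp add: pd_mult dg_def)
  finally show ?thesis using z by (simp add: sum.distrib eq_neg_iff_add_eq_0)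
qed

lemma dGi: "pd (\<lambda>y. matrix_inv (g y) $ a $ e) i x
   = - (\<Sum>b\<in>UNIV. \<Sum>c\<in>UNIV. Gi $ a $ b * dg g x i b c * Gi $ c $ e)"
proof -
  let ?d = "\<lambda>b. pd (\<lambda>y. matrix_inv (g y) $ a $ b) i x"
  have "?d e = (\<Sum>b\<in>UNIV. ?d b * (if b = e then 1 else 0))" by (simp only: sum_delta_r)
  also have "\<dots> = (\<Sum>b\<in>UNIV. ?d b * (\<Sum>c\<in>UNIV. G $ b $ c * Gi $ c $ e))" by (simp only: GGi)
  also have "\<dots> = (\<Sum>c\<in>UNIV. (\<Sum>b\<in>UNIV. ?d b * G $ b $ c) * Gi $ c $ e)"
    by (simp add: sum_distrib_left sum_distrib_right mult.assoc) (rule sum.swap)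
  also have "\<dots> = (\<Sum>c\<in>UNIV. (- (\<Sum>b\<in>UNIV. Gi $ a $ b * dg g x i b c)) * Gi $ c $ e)"
    by (simp only: dGi_raw)
  also have "\<dots> = - (\<Sum>b\<in>UNIV. \<Sum>c\<in>UNIV. Gi $ a $ b * dg g x i b c * Gi $ c $ e)"
    by (simp add: sum_distrib_right sum_negf) (rule sum.swap)
  finally show ?thesis .
qed

end



context metric_pt begin

abbreviation "Gam k i j \<equiv> christ g k i j x"
abbreviation "Gl m i j \<equiv> (dg g x i m j + dg g x j m i - dg g x m i j) / 2"

lemma christ_alt: "christ g k i j x = (\<Sum>l\<in>UNIV. Gi $ k $ l * (dg g x i l j + dg g x j l i - dg g x l i j)) / 2"
  unfolding christ_def dg_def by simp

lemma christ_low: "(\<Sum>k\<in>UNIV. G $ m $ k * christ g k i j x) = Gl m i j"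
proof -
  let ?C = "\<lambda>l. dg g x i l j + dg g x j l i - dg g x l i j"
  have "(\<Sum>k\<in>UNIV. G $ m $ k * christ g k i j x) = (\<Sum>k\<in>UNIV. \<Sum>l\<in>UNIV. G $ m $ k * Gi $ k $ l * ?C l) / 2"
    by (simp add: christ_alt sum_distrib_left sum_divide_distrib mult.assoc)
  also have "\<dots> = (\<Sum>l\<in>UNIV. (\<Sum>k\<in>UNIV. G $ m $ k * Gi $ k $ l) * ?C l) / 2"
    by (subst sum.swap) (simp add: sum_distrib_right)
  also have "\<dots> = (\<Sum>l\<in>UNIV. (if m = l then 1 else 0) * ?C l) / 2"
    by (simp only: GGi)
  also have "\<dots> = ?C m / 2" by (simp only: sum_delta_l)
  finally show ?thesis .
qed

lemma christ_sym: "christ g k i j x = christ g k j i x"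
  unfolding christ_alt using dg_sym by (simp add: algebra_simps)

lemma Gl_pair: "Gl b i a + Gl a i b = dg g x i a b"
  using dg_sym[of i a b] dg_sym[of a b i] dg_sym[of b i a] dg_sym[of b a i] dg_sym[of a i b]
  by (simp add: field_simps)


lemma lower_comp: "(\<lambda>y. lower g A y $ j) = (\<lambda>y. \<Sum>k\<in>UNIV. g y $ j $ k * A y $ k)"
  unfolding lower_def by simp

lemma lower_dif:
  assumes "\<forall>k. (\<lambda>y. A y $ k) differentiable (at x)"
  shows "(\<lambda>y. lower g A y $ j) differentiable (at x)"
  unfolding lower_comp using assms gdif by (intro differentiable_sum) auto

lemma pd_lower:
  assumes "\<forall>k. (\<lambda>y. A y $ k) differentiable (at x)"
  shows "pd (\<lambda>y. lower g A y $ j) i x = (\<Sum>k\<in>UNIV. dg g x i j k * A x $ k + G $ j $ k * pd (\<lambda>y. A y $ k) i x)"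
  unfolding lower_comp using assms gdif
  by (subst pd_sum) (auto simp: pd_mult dg_def)

lemma MC:
  assumes "\<forall>k. (\<lambda>y. A y $ k) differentiable (at x)"
  shows "cov_covec g (lower g A) i j x = (\<Sum>k\<in>UNIV. G $ j $ k * cov_vec g A i k x)"
proof -
  have a: "(\<Sum>l\<in>UNIV. christ g l i j x * lower g A x $ l) = (\<Sum>k\<in>UNIV. Gl k i j * A x $ k)"
  proof -
    have "(\<Sum>l\<in>UNIV. christ g l i j x * lower g A x $ l)
        = (\<Sum>l\<in>UNIV. \<Sum>k\<in>UNIV. christ g l i j x * G $ l $ k * A x $ k)"
      by (simp add: lower_def sum_distrib_left mult.assoc)
    also have "\<dots> = (\<Sum>k\<in>UNIV. \<Sum>l\<in>UNIV. christ g l i j x * G $ l $ k * A x $ k)"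
      by (rule sum.swap)
    also have "\<dots> = (\<Sum>k\<in>UNIV. \<Sum>l\<in>UNIV. G $ k $ l * christ g l i j x * A x $ k)"
      by (intro sum.cong refl) (simp add: symG)
    also have "\<dots> = (\<Sum>k\<in>UNIV. (\<Sum>l\<in>UNIV. G $ k $ l * christ g l i j x) * A x $ k)"
      by (simp add: sum_distrib_right)
    also have "\<dots> = (\<Sum>k\<in>UNIV. Gl k i j * A x $ k)" by (simp only: christ_low)
    finally show ?thesis .
  qed
  have b: "(\<Sum>k\<in>UNIV. G $ j $ k * (\<Sum>m\<in>UNIV. christ g k i m x * A x $ m)) = (\<Sum>m\<in>UNIV. Gl j i m * A x $ m)"
  proof -
    have "(\<Sum>k\<in>UNIV. G $ j $ k * (\<Sum>m\<in>UNIV. christ g k i m x * A x $ m))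
       = (\<Sum>k\<in>UNIV. \<Sum>m\<in>UNIV. G $ j $ k * christ g k i m x * A x $ m)"
      by (simp add: sum_distrib_left mult.assoc)
    also have "\<dots> = (\<Sum>m\<in>UNIV. (\<Sum>k\<in>UNIV. G $ j $ k * christ g k i m x) * A x $ m)"
      by (subst sum.swap) (simp add: sum_distrib_right)
    also have "\<dots> = (\<Sum>m\<in>UNIV. Gl j i m * A x $ m)" by (simp only: christ_low)
    finally show ?thesis .
  qed
  have c: "(\<Sum>k\<in>UNIV. dg g x i j k * A x $ k) = (\<Sum>k\<in>UNIV. Gl k i j * A x $ k) + (\<Sum>k\<in>UNIV. Gl j i k * A x $ k)"
  proof -
    have "(\<Sum>k\<in>UNIV. dg g x i j k * A x $ k) = (\<Sum>k\<in>UNIV. (Gl k i j + Gl j i k) * A x $ k)"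
      by (intro sum.cong refl) (simp only: Gl_pair)
    then show ?thesis by (simp add: sum.distrib distrib_right)
  qed
  have r: "(\<Sum>k\<in>UNIV. G $ j $ k * (pd (\<lambda>y. A y $ k) i x + (\<Sum>m\<in>UNIV. christ g k i m x * A x $ m)))
     = (\<Sum>k\<in>UNIV. G $ j $ k * pd (\<lambda>y. A y $ k) i x) + (\<Sum>m\<in>UNIV. Gl j i m * A x $ m)"
    using b by (simp add: distrib_left sum.distrib)
  have l: "(\<Sum>k\<in>UNIV. dg g x i j k * A x $ k + G $ j $ k * pd (\<lambda>y. A y $ k) i x)
     = (\<Sum>k\<in>UNIV. dg g x i j k * A x $ k) + (\<Sum>k\<in>UNIV. G $ j $ k * pd (\<lambda>y. A y $ k) i x)"
    by (simp add: sum.distrib)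
  show ?thesis
    unfolding cov_covec_def cov_vec_def pd_lower[OF assms] a r l c by simp
qed


lemma s3_132: "(\<Sum>a\<in>A. \<Sum>b\<in>B. \<Sum>c\<in>C. f a b c) = (\<Sum>a\<in>A. \<Sum>c\<in>C. \<Sum>b\<in>B. (f a b c::real))"
  by (rule sum.cong[OF refl]) (rule sum.swap)
lemma s3_213: "(\<Sum>a\<in>A. \<Sum>b\<in>B. \<Sum>c\<in>C. f a b c) = (\<Sum>b\<in>B. \<Sum>a\<in>A. \<Sum>c\<in>C. (f a b c::real))"
  by (rule sum.swap)

end

definition nab :: "(real^'n \<Rightarrow> real^'n^'n) \<Rightarrow> (real^'n \<Rightarrow> real^'n) \<Rightarrow> real^'n \<Rightarrow> real^'n \<Rightarrow> real^'n" where
  "nab g A V x = (\<chi> k. \<Sum>i\<in>UNIV. V $ i * cov_vec g A i k x)"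

definition dd :: "(real^'n \<Rightarrow> real) \<Rightarrow> real^'n \<Rightarrow> real^'n \<Rightarrow> real" where
  "dd f V x = (\<Sum>i\<in>UNIV. V $ i * pd f i x)"

context metric_pt begin

lemma quad_sym: "quad G X Y = quad G Y X"
  unfolding quad_def by (subst sum.swap) (simp add: symG mult_ac)

lemma QN:
  assumes "\<forall>k. (\<lambda>y. A y $ k) differentiable (at x)"
  shows "quad G (nab g A Y x) Z = (\<Sum>i\<in>UNIV. \<Sum>b\<in>UNIV. Y $ i * Z $ b * cov_covec g (lower g A) i b x)"
proof -
  have "quad G (nab g A Y x) Z = (\<Sum>a\<in>UNIV. \<Sum>b\<in>UNIV. \<Sum>i\<in>UNIV. G $ a $ b * (Y $ i * cov_vec g A i a x) * Z $ b)"
    unfolding quad_def nab_def by (simp add: sum_distrib_left sum_distrib_right)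
  also have "\<dots> = (\<Sum>i\<in>UNIV. \<Sum>b\<in>UNIV. \<Sum>a\<in>UNIV. G $ a $ b * (Y $ i * cov_vec g A i a x) * Z $ b)"
    by (rule trans[OF s3_132 trans[OF s3_213 s3_132]])
  also have "\<dots> = (\<Sum>i\<in>UNIV. \<Sum>b\<in>UNIV. Y $ i * Z $ b * (\<Sum>a\<in>UNIV. G $ b $ a * cov_vec g A i a x))"
    by (intro sum.cong refl) (simp add: sum_distrib_left symG mult_ac)
  also have "\<dots> = (\<Sum>i\<in>UNIV. \<Sum>b\<in>UNIV. Y $ i * Z $ b * cov_covec g (lower g A) i b x)"
    by (simp only: MC[OF assms])
  finally show ?thesis .
qed


lemma Lie: "lie_vec X Y x = nab g Y (X x) x - nab g X (Y x) x"
proof -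
  have e: "\<And>k. (\<Sum>i\<in>UNIV. X x $ i * (\<Sum>j\<in>UNIV. christ g k i j x * Y x $ j))
           = (\<Sum>i\<in>UNIV. Y x $ i * (\<Sum>j\<in>UNIV. christ g k i j x * X x $ j))"
  proof -
    fix k
    have "(\<Sum>i\<in>UNIV. X x $ i * (\<Sum>j\<in>UNIV. christ g k i j x * Y x $ j))
        = (\<Sum>i\<in>UNIV. \<Sum>j\<in>UNIV. X x $ i * (christ g k i j x * Y x $ j))" by (simp add: sum_distrib_left)
    also have "\<dots> = (\<Sum>j\<in>UNIV. \<Sum>i\<in>UNIV. X x $ i * (christ g k i j x * Y x $ j))" by (rule sum.swap)
    also have "\<dots> = (\<Sum>j\<in>UNIV. \<Sum>i\<in>UNIV. Y x $ j * (christ g k j i x * X x $ i))"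
      by (intro sum.cong refl) (simp add: christ_sym[of k] mult_ac)
    also have "\<dots> = (\<Sum>i\<in>UNIV. Y x $ i * (\<Sum>j\<in>UNIV. christ g k i j x * X x $ j))" by (simp add: sum_distrib_left)
    finally show "?thesis k" .
  qed
  show ?thesis
  proof (rule iffD2[OF vec_eq_iff], rule allI)
    fix k
    have "(nab g Y (X x) x - nab g X (Y x) x) $ k
      = (\<Sum>i\<in>UNIV. X x $ i * pd (\<lambda>y. Y y $ k) i x) + (\<Sum>i\<in>UNIV. X x $ i * (\<Sum>j\<in>UNIV. christ g k i j x * Y x $ j))
      - ((\<Sum>i\<in>UNIV. Y x $ i * pd (\<lambda>y. X y $ k) i x) + (\<Sum>i\<in>UNIV. Y x $ i * (\<Sum>j\<in>UNIV. christ g k i j x * X x $ j)))"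
      unfolding nab_def cov_vec_def by (simp add: distrib_left sum.distrib)
    also have "\<dots> = lie_vec X Y x $ k"
      unfolding lie_vec_def e by (simp add: sum_subtractf)
    finally show "lie_vec X Y x $ k = (nab g Y (X x) x - nab g X (Y x) x) $ k" by simp
  qed
qed


lemma KIL:
  assumes d: "\<forall>k. (\<lambda>y. A y $ k) differentiable (at x)"
    and K: "\<forall>i j. cov_covec g (lower g A) i j x + cov_covec g (lower g A) j i x = 0"
  shows "quad G (nab g A Y x) Z + quad G (nab g A Z x) Y = 0"
proof -
  let ?K = "\<lambda>i j. cov_covec g (lower g A) i j x"
  have "quad G (nab g A Z x) Y = (\<Sum>i\<in>UNIV. \<Sum>b\<in>UNIV. Z $ i * Y $ b * ?K i b)" by (rule QN[OF d])
  also have "\<dots> = (\<Sum>b\<in>UNIV. \<Sum>i\<in>UNIV. Z $ i * Y $ b * ?K i b)" by (rule sum.swap)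
  finally have 2: "quad G (nab g A Z x) Y = (\<Sum>i\<in>UNIV. \<Sum>b\<in>UNIV. Z $ b * Y $ i * ?K b i)" .
  have 1: "quad G (nab g A Y x) Z = (\<Sum>i\<in>UNIV. \<Sum>b\<in>UNIV. Y $ i * Z $ b * ?K i b)" by (rule QN[OF d])
  have "quad G (nab g A Y x) Z + quad G (nab g A Z x) Y
     = (\<Sum>i\<in>UNIV. \<Sum>b\<in>UNIV. Y $ i * Z $ b * ?K i b) + (\<Sum>i\<in>UNIV. \<Sum>b\<in>UNIV. Z $ b * Y $ i * ?K b i)"
    by (simp only: 1 2)
  also have "\<dots> = (\<Sum>i\<in>UNIV. \<Sum>b\<in>UNIV. Y $ i * Z $ b * (?K i b + ?K b i))"
    by (simp add: sum.distrib distrib_left mult_ac)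
  also have "\<dots> = 0" using K by simp
  finally show ?thesis .
qed

lemma DIVK:
  assumes d: "\<forall>k. (\<lambda>y. A y $ k) differentiable (at x)"
    and K: "\<forall>i j. cov_covec g (lower g A) i j x + cov_covec g (lower g A) j i x = 0"
  shows "divergence g A x = 0"
proof -
  let ?K = "\<lambda>i j. cov_covec g (lower g A) i j x"
  have c: "\<And>i m. cov_vec g A i m x = (\<Sum>b\<in>UNIV. Gi $ m $ b * ?K i b)"
  proof -
    fix i m
    have "(\<Sum>b\<in>UNIV. Gi $ m $ b * ?K i b) = (\<Sum>b\<in>UNIV. \<Sum>a\<in>UNIV. Gi $ m $ b * G $ b $ a * cov_vec g A i a x)"
      by (simp add: MC[OF d] sum_distrib_left mult.assoc)
    also have "\<dots> = (\<Sum>a\<in>UNIV. (\<Sum>b\<in>UNIV. Gi $ m $ b * G $ b $ a) * cov_vec g A i a x)"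
      by (subst sum.swap) (simp add: sum_distrib_right)
    also have "\<dots> = (\<Sum>a\<in>UNIV. (if m = a then 1 else 0) * cov_vec g A i a x)" by (simp only: GiG)
    also have "\<dots> = cov_vec g A i m x" by (rule sum_delta_l)
    finally show "cov_vec g A i m x = (\<Sum>b\<in>UNIV. Gi $ m $ b * ?K i b)" by simp
  qed
  define S where "S = (\<Sum>i\<in>UNIV. \<Sum>b\<in>UNIV. Gi $ i $ b * ?K i b)"
  have "S = (\<Sum>b\<in>UNIV. \<Sum>i\<in>UNIV. Gi $ i $ b * ?K i b)" unfolding S_def by (rule sum.swap)
  also have "\<dots> = (\<Sum>b\<in>UNIV. \<Sum>i\<in>UNIV. - (Gi $ b $ i * ?K b i))"
  proof (intro sum.cong refl)
    fix b i
    have "?K i b = - ?K b i" using K by (simp add: eq_neg_iff_add_eq_0)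
    then show "Gi $ i $ b * ?K i b = - (Gi $ b $ i * ?K b i)" by (simp add: symGi[of i b])
  qed
  also have "\<dots> = - S" unfolding S_def by (simp add: sum_negf)
  finally have "S = 0" by simp
  then show ?thesis unfolding divergence_def c S_def by simp
qed

lemma DIVP:
  assumes df: "f differentiable (at x)" and d: "\<forall>k. (\<lambda>y. A y $ k) differentiable (at x)"
  shows "divergence g (\<lambda>y. f y *\<^sub>R A y) x = dd f (A x) x + f x * divergence g A x"
proof -
  have "\<And>i. cov_vec g (\<lambda>y. f y *\<^sub>R A y) i i x = A x $ i * pd f i x + f x * cov_vec g A i i x"
  proof -
    fix i
    have "pd (\<lambda>y. (f y *\<^sub>R A y) $ i) i x = pd (\<lambda>y. f y * A y $ i) i x" by simp
    also have "\<dots> = pd f i x * A x $ i + f x * pd (\<lambda>y. A y $ i) i x" using df d by (simp add: pd_mult)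
    finally show "?thesis i" unfolding cov_vec_def
      by (simp add: sum_distrib_left algebra_simps)
  qed
  then show ?thesis unfolding divergence_def dd_def by (simp add: sum.distrib sum_distrib_left)
qed

lemma DIVS:
  assumes "\<forall>k. (\<lambda>y. A y $ k) differentiable (at x)" "\<forall>k. (\<lambda>y. B y $ k) differentiable (at x)"
  shows "divergence g (\<lambda>y. A y + B y) x = divergence g A x + divergence g B x"
proof -
  have "\<And>i. cov_vec g (\<lambda>y. A y + B y) i i x = cov_vec g A i i x + cov_vec g B i i x"
  proof -
    fix i
    have "pd (\<lambda>y. (A y + B y) $ i) i x = pd (\<lambda>y. A y $ i + B y $ i) i x" by simp
    also have "\<dots> = pd (\<lambda>y. A y $ i) i x + pd (\<lambda>y. B y $ i) i x" using assms by (simp add: pd_add)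
    finally show "?thesis i" unfolding cov_vec_def by (simp add: sum.distrib algebra_simps)
  qed
  then show ?thesis unfolding divergence_def by (simp add: sum.distrib)
qed

lemma DIVloc:
  assumes "\<forall>y\<in>U. A y = B y"
  shows "divergence g A x = divergence g B x"
proof -
  have "\<And>i. pd (\<lambda>y. A y $ i) i x = pd (\<lambda>y. B y $ i) i x"
    using assms by (intro pd_local[OF U]) auto
  moreover have "A x = B x" using assms U by blast
  ultimately show ?thesis unfolding divergence_def cov_vec_def by simp
qed


lemma pd_quad:
  assumes dA: "\<forall>k. (\<lambda>y. A y $ k) differentiable (at x)" and dB: "\<forall>k. (\<lambda>y. B y $ k) differentiable (at x)"
  shows "pd (\<lambda>y. quad (g y) (A y) (B y)) i x
     = quad G (\<chi> k. cov_vec g A i k x) (B x) + quad G (A x) (\<chi> k. cov_vec g B i k x)"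
proof -
  let ?pA = "\<lambda>a. pd (\<lambda>y. A y $ a) i x" and ?pB = "\<lambda>b. pd (\<lambda>y. B y $ b) i x"
  have "pd (\<lambda>y. quad (g y) (A y) (B y)) i x
     = (\<Sum>a\<in>UNIV. \<Sum>b\<in>UNIV. pd (\<lambda>y. g y $ a $ b * A y $ a * B y $ b) i x)"
  proof -
    have dterm: "\<And>a b. (\<lambda>y. g y $ a $ b * A y $ a * B y $ b) differentiable (at x)"
      using dA dB gdif by auto
    have "pd (\<lambda>y. quad (g y) (A y) (B y)) i x = (\<Sum>a\<in>UNIV. pd (\<lambda>y. \<Sum>b\<in>UNIV. g y $ a $ b * A y $ a * B y $ b) i x)"
      unfolding quad_def using dterm by (intro pd_sum) auto
    also have "\<dots> = (\<Sum>a\<in>UNIV. \<Sum>b\<in>UNIV. pd (\<lambda>y. g y $ a $ b * A y $ a * B y $ b) i x)"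
      using dterm by (intro sum.cong refl pd_sum) auto
    finally show ?thesis .
  qed
  also have "\<dots> = (\<Sum>a\<in>UNIV. \<Sum>b\<in>UNIV. dg g x i a b * A x $ a * B x $ b + G $ a $ b * ?pA a * B x $ b
      + G $ a $ b * A x $ a * ?pB b)"
    using dA dB gdif by (intro sum.cong refl) (simp add: pd_mult dg_def algebra_simps)
  finally have P: "pd (\<lambda>y. quad (g y) (A y) (B y)) i x
     = (\<Sum>a\<in>UNIV. \<Sum>b\<in>UNIV. dg g x i a b * A x $ a * B x $ b) + (\<Sum>a\<in>UNIV. \<Sum>b\<in>UNIV. G $ a $ b * ?pA a * B x $ b)
      + (\<Sum>a\<in>UNIV. \<Sum>b\<in>UNIV. G $ a $ b * A x $ a * ?pB b)"
    by (simp add: sum.distrib)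
  have E1: "(\<Sum>a\<in>UNIV. \<Sum>b\<in>UNIV. G $ a $ b * (\<Sum>m\<in>UNIV. christ g a i m x * A x $ m) * B x $ b)
      = (\<Sum>a\<in>UNIV. \<Sum>b\<in>UNIV. Gl b i a * A x $ a * B x $ b)"
  proof -
    have "(\<Sum>a\<in>UNIV. \<Sum>b\<in>UNIV. G $ a $ b * (\<Sum>m\<in>UNIV. christ g a i m x * A x $ m) * B x $ b)
       = (\<Sum>a\<in>UNIV. \<Sum>b\<in>UNIV. \<Sum>m\<in>UNIV. G $ a $ b * christ g a i m x * A x $ m * B x $ b)"
      by (simp add: sum_distrib_left sum_distrib_right mult.assoc)
    also have "\<dots> = (\<Sum>m\<in>UNIV. \<Sum>b\<in>UNIV. \<Sum>a\<in>UNIV. G $ a $ b * christ g a i m x * A x $ m * B x $ b)"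
      by (rule trans[OF s3_132 trans[OF s3_213 s3_132]])
    also have "\<dots> = (\<Sum>m\<in>UNIV. \<Sum>b\<in>UNIV. (\<Sum>a\<in>UNIV. G $ b $ a * christ g a i m x) * A x $ m * B x $ b)"
      by (intro sum.cong refl) (simp add: sum_distrib_right symG)
    also have "\<dots> = (\<Sum>m\<in>UNIV. \<Sum>b\<in>UNIV. Gl b i m * A x $ m * B x $ b)" by (simp only: christ_low)
    finally show ?thesis .
  qed
  have E2: "(\<Sum>a\<in>UNIV. \<Sum>b\<in>UNIV. G $ a $ b * A x $ a * (\<Sum>m\<in>UNIV. christ g b i m x * B x $ m))
      = (\<Sum>a\<in>UNIV. \<Sum>b\<in>UNIV. Gl a i b * A x $ a * B x $ b)"
  proof -
    have "(\<Sum>a\<in>UNIV. \<Sum>b\<in>UNIV. G $ a $ b * A x $ a * (\<Sum>m\<in>UNIV. christ g b i m x * B x $ m))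
       = (\<Sum>a\<in>UNIV. \<Sum>b\<in>UNIV. \<Sum>m\<in>UNIV. G $ a $ b * christ g b i m x * A x $ a * B x $ m)"
      by (simp add: sum_distrib_left mult_ac)
    also have "\<dots> = (\<Sum>a\<in>UNIV. \<Sum>m\<in>UNIV. \<Sum>b\<in>UNIV. G $ a $ b * christ g b i m x * A x $ a * B x $ m)"
      by (rule s3_132)
    also have "\<dots> = (\<Sum>a\<in>UNIV. \<Sum>m\<in>UNIV. (\<Sum>b\<in>UNIV. G $ a $ b * christ g b i m x) * A x $ a * B x $ m)"
      by (simp add: sum_distrib_right)
    also have "\<dots> = (\<Sum>a\<in>UNIV. \<Sum>m\<in>UNIV. Gl a i m * A x $ a * B x $ m)" by (simp only: christ_low)
    finally show ?thesis .
  qed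
  have P1: "(\<Sum>a\<in>UNIV. \<Sum>b\<in>UNIV. dg g x i a b * A x $ a * B x $ b)
     = (\<Sum>a\<in>UNIV. \<Sum>b\<in>UNIV. Gl b i a * A x $ a * B x $ b) + (\<Sum>a\<in>UNIV. \<Sum>b\<in>UNIV. Gl a i b * A x $ a * B x $ b)"
  proof -
    have "(\<Sum>a\<in>UNIV. \<Sum>b\<in>UNIV. dg g x i a b * A x $ a * B x $ b)
       = (\<Sum>a\<in>UNIV. \<Sum>b\<in>UNIV. (Gl b i a + Gl a i b) * A x $ a * B x $ b)"
      by (intro sum.cong refl) (simp only: Gl_pair)
    then show ?thesis by (simp add: sum.distrib distrib_right)
  qed
  have R1: "quad G (\<chi> k. cov_vec g A i k x) (B x)
     = (\<Sum>a\<in>UNIV. \<Sum>b\<in>UNIV. G $ a $ b * ?pA a * B x $ b)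
     + (\<Sum>a\<in>UNIV. \<Sum>b\<in>UNIV. G $ a $ b * (\<Sum>m\<in>UNIV. christ g a i m x * A x $ m) * B x $ b)"
    unfolding quad_def cov_vec_def by (simp add: sum.distrib algebra_simps)
  have R2: "quad G (A x) (\<chi> k. cov_vec g B i k x)
     = (\<Sum>a\<in>UNIV. \<Sum>b\<in>UNIV. G $ a $ b * A x $ a * ?pB b)
     + (\<Sum>a\<in>UNIV. \<Sum>b\<in>UNIV. G $ a $ b * A x $ a * (\<Sum>m\<in>UNIV. christ g b i m x * B x $ m))"
    unfolding quad_def cov_vec_def by (simp add: sum.distrib algebra_simps)
  show ?thesis unfolding P R1 R2 E1 E2 P1 by simp
qed


lemma s3_321: "(\<Sum>a\<in>A. \<Sum>b\<in>B. \<Sum>c\<in>C. f a b c) = (\<Sum>c\<in>C. \<Sum>b\<in>B. \<Sum>a\<in>A. (f a b c::real))"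
  by (rule trans[OF s3_213 trans[OF s3_132 s3_213]])

lemma ZERO: "(\<Sum>m\<in>UNIV. pd (\<lambda>y. matrix_inv (g y) $ m $ v) m x)
   + (\<Sum>m\<in>UNIV. \<Sum>k\<in>UNIV. christ g m m k x * Gi $ k $ v)
   + (\<Sum>m\<in>UNIV. \<Sum>k\<in>UNIV. christ g v m k x * Gi $ m $ k) = 0"
proof -
  define X where "X = (\<Sum>m\<in>UNIV. \<Sum>k\<in>UNIV. \<Sum>l\<in>UNIV. Gi $ v $ l * Gi $ m $ k * dg g x m l k)"
  define Y where "Y = (\<Sum>m\<in>UNIV. \<Sum>k\<in>UNIV. \<Sum>l\<in>UNIV. Gi $ v $ l * Gi $ m $ k * dg g x l m k)"
  have T1: "(\<Sum>m\<in>UNIV. pd (\<lambda>y. matrix_inv (g y) $ m $ v) m x) = - X"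
  proof -
    have "(\<Sum>m\<in>UNIV. pd (\<lambda>y. matrix_inv (g y) $ m $ v) m x)
       = (\<Sum>m\<in>UNIV. - (\<Sum>b\<in>UNIV. \<Sum>c\<in>UNIV. Gi $ m $ b * dg g x m b c * Gi $ c $ v))"
      by (simp only: dGi)
    also have "\<dots> = - X" unfolding X_def sum_negf[symmetric]
      by (intro sum.cong refl arg_cong[where f=uminus]) (simp add: dg_sym symGi mult_ac)
    finally show ?thesis .
  qed
  have T2: "(\<Sum>m\<in>UNIV. \<Sum>k\<in>UNIV. christ g m m k x * Gi $ k $ v) = Y / 2"
  proof -
    have pt: "\<And>m k. christ g m m k x * Gi $ k $ v
      = ((\<Sum>l\<in>UNIV. Gi $ m $ l * Gi $ k $ v * dg g x m l k)
        + (\<Sum>l\<in>UNIV. Gi $ m $ l * Gi $ k $ v * dg g x k l m)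
        - (\<Sum>l\<in>UNIV. Gi $ m $ l * Gi $ k $ v * dg g x l m k)) / 2"
      unfolding christ_alt by (simp add: sum_distrib_right sum_distrib_left sum.distrib[symmetric] sum_subtractf[symmetric] algebra_simps)
    have "(\<Sum>m\<in>UNIV. \<Sum>k\<in>UNIV. christ g m m k x * Gi $ k $ v)
      = ((\<Sum>m\<in>UNIV. \<Sum>k\<in>UNIV. \<Sum>l\<in>UNIV. Gi $ m $ l * Gi $ k $ v * dg g x m l k)
        + (\<Sum>m\<in>UNIV. \<Sum>k\<in>UNIV. \<Sum>l\<in>UNIV. Gi $ m $ l * Gi $ k $ v * dg g x k l m)
        - (\<Sum>m\<in>UNIV. \<Sum>k\<in>UNIV. \<Sum>l\<in>UNIV. Gi $ m $ l * Gi $ k $ v * dg g x l m k)) / 2"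
      unfolding pt by (simp only: sum_divide_distrib[symmetric] sum.distrib sum_subtractf)
    also have "(\<Sum>m\<in>UNIV. \<Sum>k\<in>UNIV. \<Sum>l\<in>UNIV. Gi $ m $ l * Gi $ k $ v * dg g x l m k)
       = (\<Sum>m\<in>UNIV. \<Sum>k\<in>UNIV. \<Sum>l\<in>UNIV. Gi $ m $ l * Gi $ k $ v * dg g x m l k)"
      by (subst s3_321) (simp add: symGi)
    also have "(\<Sum>m\<in>UNIV. \<Sum>k\<in>UNIV. \<Sum>l\<in>UNIV. Gi $ m $ l * Gi $ k $ v * dg g x k l m) = Y"
      unfolding Y_def by (subst s3_132) (simp add: symGi dg_sym mult_ac)
    finally show ?thesis by simp
  qed
  have T3: "(\<Sum>m\<in>UNIV. \<Sum>k\<in>UNIV. christ g v m k x * Gi $ m $ k) = X - Y / 2"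
  proof -
    have pt: "\<And>m k. christ g v m k x * Gi $ m $ k
      = ((\<Sum>l\<in>UNIV. Gi $ v $ l * Gi $ m $ k * dg g x m l k)
        + (\<Sum>l\<in>UNIV. Gi $ v $ l * Gi $ m $ k * dg g x k l m)
        - (\<Sum>l\<in>UNIV. Gi $ v $ l * Gi $ m $ k * dg g x l m k)) / 2"
      unfolding christ_alt by (simp add: sum_distrib_right sum_distrib_left sum.distrib[symmetric] sum_subtractf[symmetric] algebra_simps)
    have "(\<Sum>m\<in>UNIV. \<Sum>k\<in>UNIV. christ g v m k x * Gi $ m $ k)
      = ((\<Sum>m\<in>UNIV. \<Sum>k\<in>UNIV. \<Sum>l\<in>UNIV. Gi $ v $ l * Gi $ m $ k * dg g x m l k)
        + (\<Sum>m\<in>UNIV. \<Sum>k\<in>UNIV. \<Sum>l\<in>UNIV. Gi $ v $ l * Gi $ m $ k * dg g x k l m)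
        - (\<Sum>m\<in>UNIV. \<Sum>k\<in>UNIV. \<Sum>l\<in>UNIV. Gi $ v $ l * Gi $ m $ k * dg g x l m k)) / 2"
      unfolding pt by (simp only: sum_divide_distrib[symmetric] sum.distrib sum_subtractf)
    also have "(\<Sum>m\<in>UNIV. \<Sum>k\<in>UNIV. \<Sum>l\<in>UNIV. Gi $ v $ l * Gi $ m $ k * dg g x k l m) = X"
      unfolding X_def by (subst s3_213) (simp add: symGi)
    finally show ?thesis unfolding X_def Y_def by simp
  qed
  show ?thesis unfolding T1 T2 T3 by simp
qed


lemma EUL:
  assumes df: "f differentiable (at x)" and dP: "P differentiable (at x)"
    and du: "\<forall>k. (\<lambda>y. u y $ k) differentiable (at x)"
  shows "div_tensor g (\<lambda>y. \<chi> a b. f y * u y $ a * u y $ b + P y * matrix_inv (g y) $ a $ b) v x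
   = u x $ v * divergence g (\<lambda>y. f y *\<^sub>R u y) x + f x * nab g u (u x) x $ v + (\<Sum>m\<in>UNIV. Gi $ m $ v * pd P m x)"
proof -
  let ?T = "\<lambda>y. \<chi> a b. f y * u y $ a * u y $ b + P y * matrix_inv (g y) $ a $ b"
  let ?fu = "\<lambda>m. pd (\<lambda>y. f y * u y $ m) m x"
  let ?pu = "\<lambda>m. pd (\<lambda>y. u y $ v) m x"
  let ?pG = "\<lambda>m. pd (\<lambda>y. matrix_inv (g y) $ m $ v) m x"
  have pdT: "\<And>m. pd (\<lambda>y. ?T y $ m $ v) m x = ?fu m * u x $ v + f x * u x $ m * ?pu m + pd P m x * Gi $ m $ v + P x * ?pG m"
  proof -
    fix m
    have d1: "(\<lambda>y. f y * u y $ m) differentiable (at x)" using df du by auto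
    have d2: "(\<lambda>y. f y * u y $ m * u y $ v) differentiable (at x)" using df du by auto
    have d3: "(\<lambda>y. P y * matrix_inv (g y) $ m $ v) differentiable (at x)" using dP Gidif by auto
    have "pd (\<lambda>y. ?T y $ m $ v) m x = pd (\<lambda>y. f y * u y $ m * u y $ v + P y * matrix_inv (g y) $ m $ v) m x"
      by simp
    also have "\<dots> = pd (\<lambda>y. f y * u y $ m * u y $ v) m x + pd (\<lambda>y. P y * matrix_inv (g y) $ m $ v) m x"
      using d2 d3 by (rule pd_add)
    also have "pd (\<lambda>y. f y * u y $ m * u y $ v) m x = ?fu m * u x $ v + f x * u x $ m * ?pu m"
      using pd_mult[OF d1, of "\<lambda>y. u y $ v"] du by simp
    also have "pd (\<lambda>y. P y * matrix_inv (g y) $ m $ v) m x = pd P m x * Gi $ m $ v + P x * ?pG m"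
      using pd_mult[OF dP Gidif] by simp
    finally show "?thesis m" by simp
  qed
  have S1: "(\<Sum>m\<in>UNIV. pd (\<lambda>y. ?T y $ m $ v) m x)
     = (\<Sum>m\<in>UNIV. ?fu m) * u x $ v + f x * (\<Sum>m\<in>UNIV. u x $ m * ?pu m) + (\<Sum>m\<in>UNIV. pd P m x * Gi $ m $ v)
       + P x * (\<Sum>m\<in>UNIV. ?pG m)"
    unfolding pdT by (simp add: sum.distrib sum_distrib_left sum_distrib_right mult.assoc)
  have S2: "(\<Sum>m\<in>UNIV. \<Sum>k\<in>UNIV. christ g m m k x * ?T x $ k $ v)
     = u x $ v * (f x * (\<Sum>m\<in>UNIV. \<Sum>k\<in>UNIV. christ g m m k x * u x $ k))
       + P x * (\<Sum>m\<in>UNIV. \<Sum>k\<in>UNIV. christ g m m k x * Gi $ k $ v)"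
    by (simp add: sum.distrib sum_distrib_left algebra_simps)
  have S3: "(\<Sum>m\<in>UNIV. \<Sum>k\<in>UNIV. christ g v m k x * ?T x $ m $ k)
     = f x * (\<Sum>m\<in>UNIV. \<Sum>k\<in>UNIV. u x $ m * (christ g v m k x * u x $ k))
       + P x * (\<Sum>m\<in>UNIV. \<Sum>k\<in>UNIV. christ g v m k x * Gi $ m $ k)"
    by (simp add: sum.distrib sum_distrib_left algebra_simps)
  have LHS: "div_tensor g ?T v x = (\<Sum>m\<in>UNIV. pd (\<lambda>y. ?T y $ m $ v) m x)
     + (\<Sum>m\<in>UNIV. \<Sum>k\<in>UNIV. christ g m m k x * ?T x $ k $ v)
     + (\<Sum>m\<in>UNIV. \<Sum>k\<in>UNIV. christ g v m k x * ?T x $ m $ k)"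
    unfolding div_tensor_def by (simp only: sum.distrib)
  have R1: "divergence g (\<lambda>y. f y *\<^sub>R u y) x = (\<Sum>m\<in>UNIV. ?fu m) + f x * (\<Sum>m\<in>UNIV. \<Sum>k\<in>UNIV. christ g m m k x * u x $ k)"
    unfolding divergence_def cov_vec_def by (simp add: sum.distrib sum_distrib_left algebra_simps)
  have R2: "nab g u (u x) x $ v = (\<Sum>m\<in>UNIV. u x $ m * ?pu m) + (\<Sum>m\<in>UNIV. \<Sum>k\<in>UNIV. u x $ m * (christ g v m k x * u x $ k))"
    unfolding nab_def cov_vec_def by (simp add: sum.distrib sum_distrib_left algebra_simps)
  have z: "P x * (\<Sum>m\<in>UNIV. ?pG m) + P x * (\<Sum>m\<in>UNIV. \<Sum>k\<in>UNIV. christ g m m k x * Gi $ k $ v)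
     + P x * (\<Sum>m\<in>UNIV. \<Sum>k\<in>UNIV. christ g v m k x * Gi $ m $ k) = 0"
    using ZERO[of v] by (simp add: distrib_left[symmetric])
  have e: "(\<Sum>m\<in>UNIV. pd P m x * Gi $ m $ v) = (\<Sum>m\<in>UNIV. Gi $ m $ v * pd P m x)"
    by (simp add: mult.commute)
  show ?thesis unfolding LHS S1 S2 S3 R1 R2 e using z by (simp add: algebra_simps)
qed


lemma lowsum: "(\<Sum>v\<in>UNIV. (\<Sum>a\<in>UNIV. G $ v $ a * Y $ a) * X $ v) = quad G X Y"
  unfolding quad_def by (simp add: sum_distrib_right sum_distrib_left mult_ac)

lemma EULc:
  assumes df: "f differentiable (at x)" and dP: "P differentiable (at x)"
    and du: "\<forall>k. (\<lambda>y. u y $ k) differentiable (at x)"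
    and E: "\<forall>v. div_tensor g (\<lambda>y. \<chi> a b. f y * u y $ a * u y $ b + P y * matrix_inv (g y) $ a $ b) v x = 0"
  shows "quad G (u x) Y * divergence g (\<lambda>y. f y *\<^sub>R u y) x + f x * quad G (nab g u (u x) x) Y + dd P Y x = 0"
proof -
  let ?Yl = "\<lambda>v. \<Sum>a\<in>UNIV. G $ v $ a * Y $ a"
  have "0 = (\<Sum>v\<in>UNIV. ?Yl v * div_tensor g (\<lambda>y. \<chi> a b. f y * u y $ a * u y $ b + P y * matrix_inv (g y) $ a $ b) v x)"
    using E by simp
  also have "\<dots> = (\<Sum>v\<in>UNIV. ?Yl v * (u x $ v * divergence g (\<lambda>y. f y *\<^sub>R u y) x + f x * nab g u (u x) x $ v
       + (\<Sum>m\<in>UNIV. Gi $ m $ v * pd P m x)))"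
    by (simp only: EUL[OF df dP du])
  also have "\<dots> = (\<Sum>v\<in>UNIV. ?Yl v * u x $ v) * divergence g (\<lambda>y. f y *\<^sub>R u y) x
     + f x * (\<Sum>v\<in>UNIV. ?Yl v * nab g u (u x) x $ v) + (\<Sum>v\<in>UNIV. ?Yl v * (\<Sum>m\<in>UNIV. Gi $ m $ v * pd P m x))"
    by (simp add: sum.distrib sum_distrib_left sum_distrib_right algebra_simps)
  also have "(\<Sum>v\<in>UNIV. ?Yl v * u x $ v) = quad G (u x) Y" by (rule lowsum)
  also have "(\<Sum>v\<in>UNIV. ?Yl v * nab g u (u x) x $ v) = quad G (nab g u (u x) x) Y" by (rule lowsum)
  also have "(\<Sum>v\<in>UNIV. ?Yl v * (\<Sum>m\<in>UNIV. Gi $ m $ v * pd P m x)) = dd P Y x"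
  proof -
    have "(\<Sum>v\<in>UNIV. ?Yl v * (\<Sum>m\<in>UNIV. Gi $ m $ v * pd P m x))
        = (\<Sum>v\<in>UNIV. \<Sum>m\<in>UNIV. \<Sum>a\<in>UNIV. G $ v $ a * (Y $ a * (Gi $ m $ v * pd P m x)))"
      by (simp add: sum_distrib_left sum_distrib_right mult.assoc)
    also have "\<dots> = (\<Sum>m\<in>UNIV. \<Sum>a\<in>UNIV. \<Sum>v\<in>UNIV. G $ v $ a * (Y $ a * (Gi $ m $ v * pd P m x)))"
      by (rule trans[OF s3_213 s3_132])
    also have "\<dots> = (\<Sum>m\<in>UNIV. \<Sum>a\<in>UNIV. (\<Sum>v\<in>UNIV. Gi $ m $ v * G $ v $ a) * Y $ a * pd P m x)"
      by (simp add: sum_distrib_right sum_distrib_left mult_ac)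
    also have "\<dots> = (\<Sum>m\<in>UNIV. \<Sum>a\<in>UNIV. (if m = a then 1 else 0) * (Y $ a * pd P m x))"
      by (simp only: GiG mult.assoc)
    also have "\<dots> = dd P Y x" unfolding dd_def by (simp only: sum_delta_l)
    finally show ?thesis .
  qed
  finally show ?thesis by simp
qed

lemma quad_lin1: "quad G (\<chi> k. \<Sum>i\<in>UNIV. V $ i * C i k) Z = (\<Sum>i\<in>UNIV. V $ i * quad G (\<chi> k. C i k) Z)"
proof -
  have "quad G (\<chi> k. \<Sum>i\<in>UNIV. V $ i * C i k) Z = (\<Sum>a\<in>UNIV. \<Sum>b\<in>UNIV. \<Sum>i\<in>UNIV. V $ i * (G $ a $ b * C i a * Z $ b))"
    unfolding quad_def by (simp add: sum_distrib_left sum_distrib_right mult_ac)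
  also have "\<dots> = (\<Sum>i\<in>UNIV. \<Sum>a\<in>UNIV. \<Sum>b\<in>UNIV. V $ i * (G $ a $ b * C i a * Z $ b))"
    by (rule trans[OF s3_132 s3_213])
  also have "\<dots> = (\<Sum>i\<in>UNIV. V $ i * quad G (\<chi> k. C i k) Z)"
    unfolding quad_def by (simp add: sum_distrib_left)
  finally show ?thesis .
qed

lemma quad_lin2: "quad G Z (\<chi> k. \<Sum>i\<in>UNIV. V $ i * C i k) = (\<Sum>i\<in>UNIV. V $ i * quad G Z (\<chi> k. C i k))"
  using quad_lin1 quad_sym by simp

lemma L1:
  assumes dA: "\<forall>k. (\<lambda>y. A y $ k) differentiable (at x)" and dB: "\<forall>k. (\<lambda>y. B y $ k) differentiable (at x)"
  shows "dd (\<lambda>y. quad (g y) (A y) (B y)) V x = quad G (nab g A V x) (B x) + quad G (A x) (nab g B V x)"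
  unfolding dd_def pd_quad[OF dA dB] nab_def quad_lin1 quad_lin2
  by (simp add: distrib_left sum.distrib)

end



lemma pd_divide:
  assumes "f differentiable (at x)" "g differentiable (at x)" "g x \<noteq> 0"
  shows "pd (\<lambda>y. f y / g y) i x = (pd f i x * g x - f x * pd g i x) / (g x * g x)"
proof -
  have "((\<lambda>y. f y / g y) has_derivative (\<lambda>h. (frechet_derivative f (at x) h * g x - f x * frechet_derivative g (at x) h) / (g x * g x))) (at x)"
    using dif_has[OF assms(1)] dif_has[OF assms(2)] assms(3) by (rule has_derivative_divide')
  from pd_has[OF this, of i] show ?thesis by (simp add: pd_def)
qed

lemma dd_mult:
  assumes "f differentiable (at x)" "g differentiable (at x)"
  shows "dd (\<lambda>y. f y * g y) V x = dd f V x * g x + f x * dd g V x"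
  unfolding dd_def pd_mult[OF assms] by (simp add: sum_distrib_left sum_distrib_right sum.distrib algebra_simps)

lemma dd_add:
  assumes "f differentiable (at x)" "g differentiable (at x)"
  shows "dd (\<lambda>y. f y + g y) V x = dd f V x + dd g V x"
  unfolding dd_def pd_add[OF assms] by (simp add: sum.distrib algebra_simps)

lemma dd_divide:
  assumes "f differentiable (at x)" "g differentiable (at x)" "g x \<noteq> 0"
  shows "dd (\<lambda>y. f y / g y) V x = (dd f V x * g x - f x * dd g V x) / (g x * g x)"
proof -
  have "dd (\<lambda>y. f y / g y) V x = (\<Sum>i\<in>UNIV. V $ i * pd f i x * g x - f x * (V $ i * pd g i x)) / (g x * g x)"
    unfolding dd_def pd_divide[OF assms] by (simp add: sum_divide_distrib algebra_simps)
  also have "(\<Sum>i\<in>UNIV. V $ i * pd f i x * g x - f x * (V $ i * pd g i x)) = dd f V x * g x - f x * dd g V x"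
    unfolding dd_def by (simp add: sum_subtractf sum_distrib_left sum_distrib_right)
  finally show ?thesis .
qed

lemma dd_lin: "dd f (a *\<^sub>R X + b *\<^sub>R Y) x = a * dd f X x + b * dd f Y x"
  unfolding dd_def by (simp add: sum.distrib sum_distrib_left algebra_simps)

lemma dd_scale: "dd f (c *\<^sub>R X) x = c * dd f X x"
  unfolding dd_def by (simp add: sum_distrib_left algebra_simps)

lemma dd_local:
  assumes "open U" "x \<in> U" "\<forall>y\<in>U. f y = g y"
  shows "dd f V x = dd g V x"
  unfolding dd_def using pd_local[OF assms] by simp

lemma dd_const_local:
  assumes "open U" "x \<in> U" "\<forall>y\<in>U. f y = c"
  shows "dd f V x = 0"
  using dd_local[OF assms] unfolding dd_def by (simp add: pd_const)

lemma nab_scale: "nab g A (c *\<^sub>R V) x = c *\<^sub>R nab g A V x"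
  unfolding nab_def by (simp add: vec_eq_iff sum_distrib_left algebra_simps)

lemma quad_scale1: "quad G (c *\<^sub>R X) Y = c * quad G X Y"
  unfolding quad_def by (simp add: sum_distrib_left algebra_simps)
lemma quad_scale2: "quad G X (c *\<^sub>R Y) = c * quad G X Y"
  unfolding quad_def by (simp add: sum_distrib_left algebra_simps)
lemma quad_add1: "quad G (X + Y) Z = quad G X Z + quad G Y Z"
  unfolding quad_def by (simp add: sum.distrib algebra_simps)
lemma quad_add2: "quad G Z (X + Y) = quad G Z X + quad G Z Y"
  unfolding quad_def by (simp add: sum.distrib algebra_simps)

lemma Ck_dif: "Ck (Suc k) U f \<Longrightarrow> x \<in> U \<Longrightarrow> f differentiable (at x)"
  by simp

lemma Ck2_dif: "Ck 2 U f \<Longrightarrow> x \<in> U \<Longrightarrow> f differentiable (at x)"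
  by (simp add: numeral_2_eq_2)

lemma chain_N:
  fixes Nf :: "real \<Rightarrow> real \<Rightarrow> real" and P s n :: "real^'n \<Rightarrow> real"
  assumes U: "open U" "x \<in> U" and dN: "(\<lambda>z. Nf (fst z) (snd z)) differentiable (at (P x, s x))"
    and dP: "P differentiable (at x)" and ds: "s differentiable (at x)"
    and e: "\<forall>y\<in>U. n y = Nf (P y) (s y)"
  shows "\<exists>c2. \<forall>V. dd n V x = deriv (\<lambda>q. Nf q (s x)) (P x) * dd P V x + c2 * dd s V x"
proof -
  let ?F = "\<lambda>z. Nf (fst z) (snd z)"
  let ?L = "frechet_derivative ?F (at (P x, s x))"
  have hL: "(?F has_derivative ?L) (at (P x, s x))" using dN frechet_derivative_works by blast
  have lin: "linear ?L" using has_derivative_linear[OF hL] .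
  have Lab: "\<And>a b. ?L (a, b) = a * ?L (1, 0) + b * ?L (0, 1)"
  proof -
    fix a b :: real
    have "(a, b) = a *\<^sub>R (1::real, 0::real) + b *\<^sub>R (0, 1)" by simp
    then have "?L (a, b) = ?L (a *\<^sub>R (1::real, 0::real) + b *\<^sub>R (0, 1))" by simp
    also have "\<dots> = ?L (a *\<^sub>R (1::real, 0::real)) + ?L (b *\<^sub>R (0::real, 1::real))" by (rule linear_add[OF lin])
    also have "\<dots> = a * ?L (1, 0) + b * ?L (0, 1)" by (simp only: linear_scale[OF lin] real_scaleR_def)
    finally show "?L (a, b) = a * ?L (1, 0) + b * ?L (0, 1)" .
  qed
  have hPs: "((\<lambda>y. (P y, s y)) has_derivative (\<lambda>h. (frechet_derivative P (at x) h, frechet_derivative s (at x) h))) (at x)"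
    using dif_has[OF dP] dif_has[OF ds] by (rule has_derivative_Pair)
  have hc: "((\<lambda>y. ?F (P y, s y)) has_derivative (\<lambda>h. ?L (frechet_derivative P (at x) h, frechet_derivative s (at x) h))) (at x)"
    using diff_chain_at[OF hPs, of ?F ?L] hL by (simp add: o_def)
  have hn: "(n has_derivative (\<lambda>h. ?L (frechet_derivative P (at x) h, frechet_derivative s (at x) h))) (at x)"
    using has_derivative_transform_within_open[OF hc U(1) U(2)] e by simp
  have pdn: "\<And>i. pd n i x = ?L (1, 0) * pd P i x + ?L (0, 1) * pd s i x"
  proof -
    fix i
    have "pd n i x = ?L (pd P i x, pd s i x)" using pd_has[OF hn, of i] unfolding pd_def by simp
    also have "\<dots> = pd P i x * ?L (1, 0) + pd s i x * ?L (0, 1)" by (rule Lab)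
    finally show "pd n i x = ?L (1, 0) * pd P i x + ?L (0, 1) * pd s i x" by (simp only: mult.commute)
  qed
  have hq: "((\<lambda>q. ?F (q, s x)) has_derivative (\<lambda>t. ?L (t, 0))) (at (P x))"
  proof -
    have "((\<lambda>q. (q, s x)) has_derivative (\<lambda>t. (t, 0))) (at (P x))"
      by (intro has_derivative_Pair has_derivative_ident has_derivative_const)
    from diff_chain_at[OF this hL] show ?thesis by (simp add: o_def)
  qed
  have "(\<lambda>t. ?L (t, 0)) = (*) (?L (1, 0))"
  proof
    fix t :: real
    have "?L (t, 0) = t * ?L (1, 0) + 0 * ?L (0, 1)" by (rule Lab)
    then show "?L (t, 0) = ?L (1, 0) * t" by simp
  qed
  then have "((\<lambda>q. Nf q (s x)) has_real_derivative ?L (1, 0)) (at (P x))"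
    using hq unfolding has_field_derivative_def by simp
  then have dv: "deriv (\<lambda>q. Nf q (s x)) (P x) = ?L (1, 0)" by (rule DERIV_imp_deriv)
  show ?thesis
    by (rule exI[of _ "?L (0, 1)"]) (simp add: dd_def pdn dv sum.distrib sum_distrib_left sum_distrib_right algebra_simps)
qed

context metric_pt begin

lemma SHEAR:
  assumes d: "\<forall>k. (\<lambda>y. A y $ k) differentiable (at x)"
    and o: "quad G (A x) X = 0" and n: "quad G X X = -1"
  shows "tensor_eval (\<lambda>m v. shear g A m v x) X X = quad G (nab g A X x) X + expansion g A x / (real CARD('n) - 1)"
proof -
  let ?K = "\<lambda>i j. cov_covec g (lower g A) i j x"
  have lA: "(\<Sum>m\<in>UNIV. lower g A x $ m * X $ m) = 0"
  proof -
    have "(\<Sum>m\<in>UNIV. lower g A x $ m * X $ m) = (\<Sum>m\<in>UNIV. \<Sum>j\<in>UNIV. G $ m $ j * A x $ j * X $ m)"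
      unfolding lower_def by (simp add: sum_distrib_right)
    also have "\<dots> = quad G X (A x)"
      unfolding quad_def by (intro sum.cong refl) (simp add: mult_ac)
    finally have "(\<Sum>m\<in>UNIV. lower g A x $ m * X $ m) = quad G X (A x)" .
    then show ?thesis using o quad_sym by simp
  qed
  have k1: "(\<Sum>m\<in>UNIV. \<Sum>v\<in>UNIV. ?K m v * X $ m * X $ v) = quad G (nab g A X x) X"
    using QN[OF d, of X X] by (simp add: mult_ac)
  have k2: "(\<Sum>m\<in>UNIV. \<Sum>v\<in>UNIV. ?K v m * X $ m * X $ v) = quad G (nab g A X x) X"
    unfolding k1[symmetric] by (subst sum.swap) (simp add: mult_ac)
  have b1: "(\<Sum>m\<in>UNIV. \<Sum>v\<in>UNIV. Bred g A m v x * X $ m * X $ v) = quad G (nab g A X x) X"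
  proof -
    have "(\<Sum>m\<in>UNIV. \<Sum>v\<in>UNIV. Bred g A m v x * X $ m * X $ v)
      = (\<Sum>m\<in>UNIV. \<Sum>v\<in>UNIV. ?K m v * X $ m * X $ v)
        - (\<Sum>m\<in>UNIV. \<Sum>v\<in>UNIV. (lower g A x $ m * X $ m) * (lower g (accel g A) x $ v * X $ v))"
      unfolding Bred_def by (simp add: sum_subtractf algebra_simps)
    also have "(\<Sum>m\<in>UNIV. \<Sum>v\<in>UNIV. (lower g A x $ m * X $ m) * (lower g (accel g A) x $ v * X $ v))
      = (\<Sum>m\<in>UNIV. lower g A x $ m * X $ m) * (\<Sum>v\<in>UNIV. lower g (accel g A) x $ v * X $ v)"
      by (rule sum_product[symmetric])
    finally show ?thesis using lA k1 by simp
  qed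
  have b2: "(\<Sum>m\<in>UNIV. \<Sum>v\<in>UNIV. Bred g A v m x * X $ m * X $ v) = quad G (nab g A X x) X"
  proof -
    have "(\<Sum>m\<in>UNIV. \<Sum>v\<in>UNIV. Bred g A v m x * X $ m * X $ v) = (\<Sum>m\<in>UNIV. \<Sum>v\<in>UNIV. Bred g A m v x * X $ m * X $ v)"
      by (subst sum.swap) (simp add: mult_ac)
    then show ?thesis using b1 by simp
  qed
  have gp: "(\<Sum>m\<in>UNIV. \<Sum>v\<in>UNIV. gperp g A m v x * X $ m * X $ v) = -1"
  proof -
    have "(\<Sum>m\<in>UNIV. \<Sum>v\<in>UNIV. gperp g A m v x * X $ m * X $ v)
      = quad G X X - (\<Sum>m\<in>UNIV. lower g A x $ m * X $ m) * (\<Sum>v\<in>UNIV. lower g A x $ v * X $ v)"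
      unfolding gperp_def quad_def by (simp add: sum_distrib_left sum_distrib_right sum_subtractf algebra_simps)
    then show ?thesis using lA n by simp
  qed
  define c where "c = expansion g A x / (real CARD('n) - 1)"
  have pt: "\<And>m v. shear g A m v x * X $ m * X $ v
     = Bred g A m v x * X $ m * X $ v / 2 + Bred g A v m x * X $ m * X $ v / 2 - c * (gperp g A m v x * X $ m * X $ v)"
    unfolding shear_def c_def[symmetric] by (simp add: field_simps)
  have "tensor_eval (\<lambda>m v. shear g A m v x) X X
     = (\<Sum>m\<in>UNIV. \<Sum>v\<in>UNIV. Bred g A m v x * X $ m * X $ v) / 2 + (\<Sum>m\<in>UNIV. \<Sum>v\<in>UNIV. Bred g A v m x * X $ m * X $ v) / 2
       - c * (\<Sum>m\<in>UNIV. \<Sum>v\<in>UNIV. gperp g A m v x * X $ m * X $ v)"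
    unfolding tensor_eval_def pt
    by (simp only: sum.distrib sum_subtractf sum_divide_distrib sum_distrib_left)
  then show ?thesis using b1 b2 gp unfolding c_def by simp
qed

end



lemma quad_symg: "\<forall>i j. G $ i $ j = G $ j $ i \<Longrightarrow> quad G X Y = quad G Y X"
  unfolding quad_def by (subst sum.swap) (simp add: mult_ac)

lemma quad_dif:
  assumes "\<forall>i j. (\<lambda>y. g y $ i $ j) differentiable (at x)"
    "\<forall>k. (\<lambda>y. A y $ k) differentiable (at x)" "\<forall>k. (\<lambda>y. B y $ k) differentiable (at x)"
  shows "(\<lambda>y. quad (g y) (A y) (B y)) differentiable (at x)"
  unfolding quad_def using assms by (intro differentiable_sum ballI) auto

lemma decomp_pt:
  fixes G :: "real^'n^'n" and xi eta uu :: "real^'n" and vv :: real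
  assumes sym: "\<forall>i j. G $ i $ j = G $ j $ i" and w: "quad G xi xi < 0" and ee: "quad G eta eta = 1"
    and ex: "quad G eta ((1 / sqrt \<bar>quad G xi xi\<bar>) *\<^sub>R xi) = 0" and v: "0 \<le> vv" "vv < 1"
    and uu: "uu = (1 / sqrt (1 - vv\<^sup>2)) *\<^sub>R ((1 / sqrt \<bar>quad G xi xi\<bar>) *\<^sub>R xi + vv *\<^sub>R eta)"
  shows "quad G uu xi / quad G xi xi = (1 / sqrt (1 - vv\<^sup>2)) / sqrt \<bar>quad G xi xi\<bar>"
    and "quad G uu eta = (1 / sqrt (1 - vv\<^sup>2)) * vv"
    and "uu = (quad G uu xi / quad G xi xi) *\<^sub>R xi + quad G uu eta *\<^sub>R eta"
    and "quad G uu eta * quad G uu eta + (quad G uu xi / quad G xi xi) * (quad G uu xi / quad G xi xi) * quad G xi xi = -1"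
proof -
  define W where "W = quad G xi xi"
  define N0 where "N0 = sqrt \<bar>W\<bar>"
  define ga where "ga = 1 / sqrt (1 - vv\<^sup>2)"
  have W0: "W < 0" using w W_def by simp
  have N0p: "N0 > 0" unfolding N0_def using W0 by simp
  have N0sq: "N0 * N0 = - W" unfolding N0_def using W0 by simp
  have "vv * vv \<le> vv" using v mult_left_le[of vv vv] by simp
  then have vv1: "1 - vv\<^sup>2 > 0" using v by (simp add: power2_eq_square)
  have gap: "ga > 0" unfolding ga_def using vv1 by simp
  have sq: "sqrt (1 - vv\<^sup>2) * sqrt (1 - vv\<^sup>2) = 1 - vv\<^sup>2" using vv1 by simp
  have gasq: "ga * ga * (1 - vv\<^sup>2) = 1" unfolding ga_def using vv1 sq
    by (simp add: field_simps)
  have ex0: "quad G eta xi = 0" using ex N0p unfolding quad_scale2 W_def[symmetric] N0_def[symmetric] by simp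
  have "quad G xi eta = quad G eta xi" by (rule quad_symg[OF sym])
  then have ex1: "quad G xi eta = 0" using ex0 by simp
  have uu': "uu = ga *\<^sub>R ((1 / N0) *\<^sub>R xi + vv *\<^sub>R eta)" using uu unfolding ga_def N0_def W_def by simp
  have Q: "quad G uu xi = ga * W / N0"
    unfolding uu' quad_scale1 quad_add1 ex0 W_def by simp
  have B: "quad G uu eta = ga * vv"
    unfolding uu' quad_scale1 quad_add1 ex1 ee by simp
  have A: "quad G uu xi / quad G xi xi = ga / N0"
    unfolding Q W_def[symmetric] using W0 by simp
  show "quad G uu xi / quad G xi xi = (1 / sqrt (1 - vv\<^sup>2)) / sqrt \<bar>quad G xi xi\<bar>"
    using A unfolding ga_def N0_def W_def .
  show "quad G uu eta = (1 / sqrt (1 - vv\<^sup>2)) * vv" using B unfolding ga_def .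
  show "uu = (quad G uu xi / quad G xi xi) *\<^sub>R xi + quad G uu eta *\<^sub>R eta"
    unfolding A B using uu' by (simp add: scaleR_add_right)
  have "quad G uu eta * quad G uu eta + (quad G uu xi / quad G xi xi) * (quad G uu xi / quad G xi xi) * quad G xi xi
     = (ga * vv) * (ga * vv) + (ga / N0) * (ga / N0) * W"
  proof -
    have A': "quad G uu xi / W = ga / N0" unfolding Q using W0 by simp
    show ?thesis unfolding W_def[symmetric] A' B by simp
  qed
  also have "\<dots> = ga * ga * vv * vv + ga * ga * W / (N0 * N0)" by (simp add: field_simps)
  also have "\<dots> = - (ga * ga * (1 - vv\<^sup>2))" unfolding N0sq using W0 by (simp add: field_simps power2_eq_square)
  also have "\<dots> = -1" using gasq by simp
  finally show "quad G uu eta * quad G uu eta + (quad G uu xi / quad G xi xi) * (quad G uu xi / quad G xi xi) * quad G xi xi = -1" .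
qed

theorem proposition1:
  fixes g :: "real^'n \<Rightarrow> real^'n^'n"
    and U :: "(real^'n) set" and p :: "real^'n"
    and \<xi> u \<eta> :: "real^'n \<Rightarrow> real^'n"
    and n h P s T v :: "real^'n \<Rightarrow> real"
    and H N Tm :: "real \<Rightarrow> real \<Rightarrow> real" and D :: "(real \<times> real) set"
  defines "d \<equiv> real CARD('n) - 1"
  defines "\<xi>b \<equiv> normalize_field g \<xi>"
  defines "vs \<equiv> (\<lambda>x. sqrt (sound_speed_sq H N (P x) (s x)))"
  assumes dim: "CARD('n) \<ge> 2"
    \<comment> \<open>spacetime (chart on a neighbourhood U of p)\<close>
    and U: "open U" "p \<in> U"
    and metric: "smooth_metric U g" "\<forall>x\<in>U. lorentzian (g x)"
    \<comment> \<open>timelike Killing field\<close>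
    and killing: "smooth_vec U \<xi>" "killing_on g U \<xi>" "\<forall>x\<in>U. quad (g x) (\<xi> x) (\<xi> x) < 0"
    \<comment> \<open>equation of state\<close>
    and eos: "eos D H N Tm" "\<forall>x\<in>U. (P x, s x) \<in> D"
    and state: "\<forall>x\<in>U. h x = H (P x) (s x) \<and> n x = N (P x) (s x) \<and> T x = Tm (P x) (s x)"
    \<comment> \<open>regularity C^2\<close>
    and reg: "Ck 2 U n" "Ck 2 U h" "Ck 2 U P" "Ck 2 U s" "Ck 2 U T" "Ck_vec 2 U u"
             "Ck 2 U v" "Ck_vec 2 U \<eta>"
    \<comment> \<open>perfect fluid\<close>
    and pos: "\<forall>x\<in>U. n x > 0 \<and> h x > 0 \<and> P x > 0 \<and> s x > 0 \<and> T x > 0"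
    and unit_u: "\<forall>x\<in>U. quad (g x) (u x) (u x) = -1"
    and gibbs: "\<forall>x\<in>U. \<forall>i. pd h i x = T x * pd s i x + pd P i x / n x"
    and continuity: "\<forall>x\<in>U. divergence g (\<lambda>y. n y *\<^sub>R u y) x = 0"
    and euler: "\<forall>x\<in>U. \<forall>\<nu>. div_tensor g
        (\<lambda>y. \<chi> \<alpha> \<beta>. n y * h y * u y $ \<alpha> * u y $ \<beta> + P y * matrix_inv (g y) $ \<alpha> $ \<beta>) \<nu> x = 0"
    \<comment> \<open>steady flow\<close>
    and steady: "\<forall>x\<in>U. lie_scalar \<xi> P x = 0 \<and> lie_scalar \<xi> s x = 0 \<and> lie_vec \<xi> u x = 0"
    \<comment> \<open>decomposition u = (1-v^2)^{-1/2} (\<xi>b + v \<eta>)\<close>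
    and decomp: "\<forall>x\<in>U. 0 \<le> v x \<and> v x < 1 \<and>
        u x = (1 / sqrt (1 - (v x)\<^sup>2)) *\<^sub>R (\<xi>b x + v x *\<^sub>R \<eta> x)"
    and eta: "\<forall>x\<in>U. quad (g x) (\<eta> x) (\<eta> x) = 1 \<and> quad (g x) (\<eta> x) (\<xi>b x) = 0 \<and> lie_vec \<xi> \<eta> x = 0"
    \<comment> \<open>sonic point with nonvanishing expansion\<close>
    and sonic: "v p = vs p"
    and expand: "expansion g \<eta> p \<noteq> 0"
  shows "vs p = 1 / sqrt d \<longleftrightarrow> tensor_eval (\<lambda>\<mu> \<nu>. shear g \<eta> \<mu> \<nu> p) (\<xi>b p) (\<xi>b p) = 0"
proof -
  have pU: "p \<in> U" by (rule U(2))
  have gdif: "\<forall>i j. (\<lambda>y. g y $ i $ j) differentiable (at p)"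
  proof (intro allI)
    fix i j
    have "smooth_fn U (\<lambda>x. g x $ i $ j)" using metric(1) unfolding smooth_metric_def by blast
    then have "Ck (Suc 0) U (\<lambda>x. g x $ i $ j)" unfolding smooth_fn_def by blast
    then show "(\<lambda>y. g y $ i $ j) differentiable (at p)" using Ck_dif pU by blast
  qed
  interpret M: metric_pt g U p using U metric(2) gdif by unfold_locales auto
  have dn: "n differentiable (at p)" by (rule Ck2_dif[OF reg(1) pU])
  have dh: "h differentiable (at p)" by (rule Ck2_dif[OF reg(2) pU])
  have dP: "P differentiable (at p)" by (rule Ck2_dif[OF reg(3) pU])
  have ds: "s differentiable (at p)" by (rule Ck2_dif[OF reg(4) pU])
  have du: "\<forall>k. (\<lambda>y. u y $ k) differentiable (at p)"
    using reg(6) pU Ck2_dif unfolding Ck_vec_def by blast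
  have deta: "\<forall>k. (\<lambda>y. \<eta> y $ k) differentiable (at p)"
    using reg(8) pU Ck2_dif unfolding Ck_vec_def by blast
  have dxi: "\<forall>k. (\<lambda>y. \<xi> y $ k) differentiable (at p)"
  proof
    fix k
    have "smooth_fn U (\<lambda>x. \<xi> x $ k)" using killing(1) unfolding smooth_vec_def by blast
    then have "Ck (Suc 0) U (\<lambda>x. \<xi> x $ k)" unfolding smooth_fn_def by blast
    then show "(\<lambda>y. \<xi> y $ k) differentiable (at p)" using Ck_dif pU by blast
  qed
  define W where "W = (\<lambda>y. quad (g y) (\<xi> y) (\<xi> y))"
  define Q where "Q = (\<lambda>y. quad (g y) (u y) (\<xi> y))"
  define be where "be = (\<lambda>y. quad (g y) (u y) (\<eta> y))"
  define al where "al = (\<lambda>y. Q y / W y)"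
  have W0: "\<forall>y\<in>U. W y < 0" using killing(3) unfolding W_def by simp
  have dW: "W differentiable (at p)" unfolding W_def by (rule quad_dif[OF gdif dxi dxi])
  have dQ: "Q differentiable (at p)" unfolding Q_def by (rule quad_dif[OF gdif du dxi])
  have dbe: "be differentiable (at p)" unfolding be_def by (rule quad_dif[OF gdif du deta])
  have wp: "W p < 0" using W0 pU by blast
  have dal: "al differentiable (at p)" unfolding al_def using dQ dW wp by (intro differentiable_divide) auto
  have dec: "\<forall>y\<in>U. al y = (1 / sqrt (1 - (v y)\<^sup>2)) / sqrt \<bar>W y\<bar> \<and> be y = (1 / sqrt (1 - (v y)\<^sup>2)) * v y
      \<and> u y = al y *\<^sub>R \<xi> y + be y *\<^sub>R \<eta> y \<and> be y * be y + al y * al y * W y = -1"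
  proof
    fix y assume y: "y \<in> U"
    have sym: "\<forall>i j. g y $ i $ j = g y $ j $ i" using M.sym_U[OF y] by blast
    have ex: "quad (g y) (\<eta> y) ((1 / sqrt \<bar>quad (g y) (\<xi> y) (\<xi> y)\<bar>) *\<^sub>R \<xi> y) = 0"
      using eta y unfolding \<xi>b_def normalize_field_def by simp
    have ee: "quad (g y) (\<eta> y) (\<eta> y) = 1" using eta y by simp
    have vv: "0 \<le> v y" "v y < 1" using decomp y by auto
    have uu: "u y = (1 / sqrt (1 - (v y)\<^sup>2)) *\<^sub>R ((1 / sqrt \<bar>quad (g y) (\<xi> y) (\<xi> y)\<bar>) *\<^sub>R \<xi> y + v y *\<^sub>R \<eta> y)"
      using decomp y unfolding \<xi>b_def normalize_field_def by simp
    note DP = decomp_pt[OF sym killing(3)[rule_format, OF y] ee ex vv uu]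
    show "al y = (1 / sqrt (1 - (v y)\<^sup>2)) / sqrt \<bar>W y\<bar> \<and> be y = (1 / sqrt (1 - (v y)\<^sup>2)) * v y
      \<and> u y = al y *\<^sub>R \<xi> y + be y *\<^sub>R \<eta> y \<and> be y * be y + al y * al y * W y = -1"
      unfolding al_def Q_def W_def be_def by (intro conjI DP)
  qed
  have K: "\<forall>i j. cov_covec g (lower g \<xi>) i j p + cov_covec g (lower g \<xi>) j i p = 0"
    using killing(2) pU unfolding killing_on_def by blast
  have KIL: "\<And>Y Z. quad (g p) (nab g \<xi> Y p) Z + quad (g p) (nab g \<xi> Z p) Y = 0"
    by (rule M.KIL[OF dxi K])
  have lieu: "nab g u (\<xi> p) p = nab g \<xi> (u p) p"
  proof -
    have "lie_vec \<xi> u p = 0" using steady pU by blast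
    then show ?thesis unfolding M.Lie by simp
  qed
  have liee: "nab g \<eta> (\<xi> p) p = nab g \<xi> (\<eta> p) p"
  proof -
    have "lie_vec \<xi> \<eta> p = 0" using eta pU by blast
    then show ?thesis unfolding M.Lie by simp
  qed
  have ddW: "\<And>V. dd W V p = 2 * quad (g p) (nab g \<xi> V p) (\<xi> p)"
  proof -
    fix V
    have "dd W V p = quad (g p) (nab g \<xi> V p) (\<xi> p) + quad (g p) (\<xi> p) (nab g \<xi> V p)"
      unfolding W_def by (rule M.L1[OF dxi dxi])
    then show "dd W V p = 2 * quad (g p) (nab g \<xi> V p) (\<xi> p)" using M.quad_sym[of "\<xi> p"] by simp
  qed
  have ddWxi: "dd W (\<xi> p) p = 0" using ddW[of "\<xi> p"] KIL[of "\<xi> p" "\<xi> p"] by simp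
  have ddQ: "\<And>V. dd Q V p = quad (g p) (nab g u V p) (\<xi> p) + quad (g p) (u p) (nab g \<xi> V p)"
    unfolding Q_def by (rule M.L1[OF du dxi])
  have ddQxi: "dd Q (\<xi> p) p = 0"
  proof -
    have "dd Q (\<xi> p) p = quad (g p) (nab g \<xi> (u p) p) (\<xi> p) + quad (g p) (nab g \<xi> (\<xi> p) p) (u p)"
      using ddQ[of "\<xi> p"] lieu M.quad_sym[of "u p"] by simp
    then show ?thesis using KIL[of "u p" "\<xi> p"] by simp
  qed
  have Wp0: "W p \<noteq> 0" using wp by simp
  have ddalxi: "dd al (\<xi> p) p = 0"
    unfolding al_def using dd_divide[OF dQ dW Wp0] ddQxi ddWxi by simp
  have uu0: "quad (g p) (nab g u (u p) p) (u p) = 0"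
  proof -
    have "dd (\<lambda>y. quad (g y) (u y) (u y)) (u p) p = 0"
      by (rule dd_const_local[OF U(1) pU, where c="-1"]) (use unit_u in simp)
    then show ?thesis unfolding M.L1[OF du du] using M.quad_sym[of "u p" "nab g u (u p) p"] by simp
  qed
  have divxi: "divergence g \<xi> p = 0" by (rule M.DIVK[OF dxi K])
  have dnh: "(\<lambda>y. n y * h y) differentiable (at p)" using dn dh by simp
  have Eu: "\<forall>v. div_tensor g (\<lambda>y. \<chi> a b. n y * h y * u y $ a * u y $ b + P y * matrix_inv (g y) $ a $ b) v p = 0"
    using euler pU by blast
  have EU: "\<And>Y. quad (g p) (u p) Y * divergence g (\<lambda>y. (n y * h y) *\<^sub>R u y) p
      + n p * h p * quad (g p) (nab g u (u p) p) Y + dd P Y p = 0"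
    using M.EULc[OF dnh dP du Eu] by simp
  have cont: "divergence g (\<lambda>y. n y *\<^sub>R u y) p = 0" using continuity pU by blast
  have dnu: "\<forall>k. (\<lambda>y. (n y *\<^sub>R u y) $ k) differentiable (at p)" using dn du by simp
  have divnhu: "divergence g (\<lambda>y. (n y * h y) *\<^sub>R u y) p = n p * dd h (u p) p"
  proof -
    have fe: "(\<lambda>y. (n y * h y) *\<^sub>R u y) = (\<lambda>y. h y *\<^sub>R (n y *\<^sub>R u y))" by (simp add: fun_eq_iff mult.commute)
    have "divergence g (\<lambda>y. h y *\<^sub>R (n y *\<^sub>R u y)) p = dd h (n p *\<^sub>R u p) p + h p * divergence g (\<lambda>y. n y *\<^sub>R u y) p"
      by (rule M.DIVP[OF dh dnu])
    then show ?thesis unfolding fe cont dd_scale by simp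
  qed
  have E1: "n p * dd h (u p) p = dd P (u p) p"
    using EU[of "u p"] unit_u pU uu0 divnhu by simp
  have gib: "\<And>V. dd h V p = T p * dd s V p + dd P V p / n p"
    unfolding dd_def using gibbs pU by (simp add: sum.distrib sum_distrib_left sum_divide_distrib algebra_simps)
  have posp: "n p > 0" "h p > 0" "P p > 0" "s p > 0" "T p > 0" using pos pU by auto
  have dsu: "dd s (u p) p = 0"
  proof -
    have "n p * (T p * dd s (u p) p + dd P (u p) p / n p) = dd P (u p) p" using E1 gib by simp
    then have "n p * T p * dd s (u p) p = 0" using posp by (simp add: field_simps)
    then show ?thesis using posp by simp
  qed
  have dPxi: "dd P (\<xi> p) p = 0" using steady pU unfolding lie_scalar_def dd_def by simp
  have dsxi: "dd s (\<xi> p) p = 0" using steady pU unfolding lie_scalar_def dd_def by simp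
  have eosD: "open D" "Ck 2 D (\<lambda>z. N (fst z) (snd z))" using eos(1) unfolding eos_def by auto
  have PsD: "(P p, s p) \<in> D" using eos(2) pU by blast
  have dN: "(\<lambda>z. N (fst z) (snd z)) differentiable (at (P p, s p))" by (rule Ck2_dif[OF eosD(2) PsD])
  have nN: "\<forall>y\<in>U. n y = N (P y) (s y)" using state by blast
  obtain c2 where chain: "\<forall>V. dd n V p = deriv (\<lambda>q. N q (s p)) (P p) * dd P V p + c2 * dd s V p"
    using chain_N[OF U(1) pU dN dP ds nN] by blast
  define c where "c = deriv (\<lambda>q. N q (s p)) (P p)"
  define a where "a = al p"
  define b where "b = be p"
  define w where "w = W p"
  define ga where "ga = 1 / sqrt (1 - (v p)\<^sup>2)"
  define N0 where "N0 = sqrt \<bar>w\<bar>"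
  have decp: "a = ga / N0" "b = ga * v p" "u p = a *\<^sub>R \<xi> p + b *\<^sub>R \<eta> p" "b * b + a * a * w = -1"
    using dec pU unfolding a_def b_def w_def ga_def N0_def by auto
  have vp: "0 \<le> v p" "v p < 1" using decomp pU by auto
  have vv1: "1 - (v p)\<^sup>2 > 0"
  proof -
    have "v p * v p \<le> v p" using vp mult_left_le[of "v p" "v p"] by simp
    then show ?thesis using vp by (simp add: power2_eq_square)
  qed
  have gap: "ga > 0" unfolding ga_def using vv1 by simp
  have N0p: "N0 > 0" unfolding N0_def w_def using wp by simp
  have N0sq: "N0 * N0 = - w" unfolding N0_def w_def using wp by simp
  have eosp: "H (P p) (s p) > 0" "N (P p) (s p) > 0"
    "((\<lambda>q. H q (s p)) has_real_derivative (1 / N (P p) (s p))) (at (P p))"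
    "deriv (\<lambda>q. N q (s p)) (P p) \<noteq> 0"
    "0 < sound_speed_sq H N (P p) (s p)" "sound_speed_sq H N (P p) (s p) < 1"
    using eos(1) PsD unfolding eos_def by blast+
  have hN: "h p = H (P p) (s p)" "n p = N (P p) (s p)" using state pU by auto
  define S where "S = sound_speed_sq H N (P p) (s p)"
  have c0: "c \<noteq> 0" using eosp(4) unfolding c_def .
  have dH: "deriv (\<lambda>q. H q (s p)) (P p) = 1 / n p" using DERIV_imp_deriv[OF eosp(3)] hN by simp
  have Sform: "S * h p * c = 1"
    unfolding S_def sound_speed_sq_def dH c_def[symmetric] hN[symmetric] using posp c0 by (simp add: field_simps)
  have Spos: "S > 0" using eosp(5) unfolding S_def .
  have vsS: "vs p = sqrt S" unfolding vs_def S_def by simp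
  have vS: "v p * v p = S" using sonic vsS Spos by simp
  have bpos: "b > 0"
  proof -
    have "v p > 0" using sonic vsS Spos by simp
    then show ?thesis using decp(2) gap by simp
  qed
  have apos: "a > 0" using decp(1) gap N0p by simp
  have b2: "b * b = - S * (a * a * w)"
  proof -
    have w0: "w < 0" unfolding w_def using wp .
    have "a * a * w = - (ga * ga)" unfolding decp(1) using N0sq N0p w0 by (simp add: field_simps)
    moreover have "b * b = ga * ga * S" unfolding decp(2) vS[symmetric] by (simp add: mult_ac)
    ultimately show ?thesis by simp
  qed
  define Th where "Th = expansion g \<eta> p"
  have dalxi: "\<forall>k. (\<lambda>y. (al y *\<^sub>R \<xi> y) $ k) differentiable (at p)" using dal dxi by simp
  have dbeeta: "\<forall>k. (\<lambda>y. (be y *\<^sub>R \<eta> y) $ k) differentiable (at p)" using dbe deta by simp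
  have divu: "divergence g u p = dd be (\<eta> p) p + b * Th"
  proof -
    have "divergence g u p = divergence g (\<lambda>y. al y *\<^sub>R \<xi> y + be y *\<^sub>R \<eta> y) p"
      by (rule M.DIVloc) (use dec in blast)
    also have "\<dots> = divergence g (\<lambda>y. al y *\<^sub>R \<xi> y) p + divergence g (\<lambda>y. be y *\<^sub>R \<eta> y) p"
      by (rule M.DIVS[OF dalxi dbeeta])
    also have "divergence g (\<lambda>y. al y *\<^sub>R \<xi> y) p = dd al (\<xi> p) p + al p * divergence g \<xi> p"
      by (rule M.DIVP[OF dal dxi])
    also have "divergence g (\<lambda>y. be y *\<^sub>R \<eta> y) p = dd be (\<eta> p) p + be p * divergence g \<eta> p"
      by (rule M.DIVP[OF dbe deta])
    finally show ?thesis unfolding ddalxi divxi b_def Th_def expansion_def by simp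
  qed
  define Hh where "Hh = dd h (u p) p"
  have E3: "c * Hh + (dd be (\<eta> p) p + b * Th) = 0"
  proof -
    have "0 = dd n (u p) p + n p * divergence g u p"
      using M.DIVP[OF dn du] cont by simp
    also have "dd n (u p) p = c * dd P (u p) p" using chain dsu unfolding c_def by simp
    also have "\<dots> = c * (n p * Hh)" unfolding Hh_def E1 ..
    finally have "n p * (c * Hh + divergence g u p) = 0" by (simp add: algebra_simps)
    then show ?thesis using posp divu by simp
  qed
  have Qp: "Q p = a * w" unfolding a_def al_def w_def using Wp0 by simp
  have E2: "a * w * Hh + h p * b * dd Q (\<eta> p) p = 0"
  proof -
    have "quad (g p) (u p) (nab g \<xi> (u p) p) = 0"
      using KIL[of "u p" "u p"] M.quad_sym[of "u p" "nab g \<xi> (u p) p"] by simp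
    then have qn: "quad (g p) (nab g u (u p) p) (\<xi> p) = dd Q (u p) p" using ddQ[of "u p"] by simp
    have ddQu: "dd Q (u p) p = b * dd Q (\<eta> p) p" unfolding decp(3) dd_lin ddQxi by simp
    have "Q p * (n p * Hh) + n p * h p * dd Q (u p) p + 0 = 0"
      using EU[of "\<xi> p"] unfolding divnhu qn dPxi Hh_def Q_def by simp
    then have "n p * (Q p * Hh + h p * dd Q (u p) p) = 0" by (simp add: algebra_simps)
    then have "Q p * Hh + h p * dd Q (u p) p = 0" using posp by simp
    then show ?thesis unfolding Qp ddQu by (simp add: mult_ac)
  qed
  have E4: "2 * b * dd be (\<eta> p) p + 2 * a * w * dd al (\<eta> p) p + a * a * dd W (\<eta> p) p = 0"
  proof -
    have "dd (\<lambda>y. be y * be y + al y * al y * W y) (\<eta> p) p = 0"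
      by (rule dd_const_local[OF U(1) pU, where c="-1"]) (use dec in blast)
    moreover have "dd (\<lambda>y. be y * be y + al y * al y * W y) (\<eta> p) p
       = dd be (\<eta> p) p * be p + be p * dd be (\<eta> p) p
         + ((dd al (\<eta> p) p * al p + al p * dd al (\<eta> p) p) * W p + al p * al p * dd W (\<eta> p) p)"
    proof -
      have d1: "(\<lambda>y. be y * be y) differentiable (at p)" using dbe by simp
      have d2: "(\<lambda>y. al y * al y * W y) differentiable (at p)" using dal dW by simp
      have d3: "(\<lambda>y. al y * al y) differentiable (at p)" using dal by simp
      show ?thesis
        unfolding dd_add[OF d1 d2] dd_mult[OF dbe dbe] dd_mult[OF d3 dW] dd_mult[OF dal dal] by simp
    qed
    ultimately show ?thesis unfolding a_def b_def w_def by (simp add: algebra_simps)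
  qed
  have E5: "dd al (\<eta> p) p * (w * w) = dd Q (\<eta> p) p * w - a * w * dd W (\<eta> p) p"
    using dd_divide[OF dQ dW Wp0, of "\<eta> p"] Qp Wp0 unfolding al_def[symmetric] w_def[symmetric]
    by (simp add: field_simps)
  define q where "q = dd Q (\<eta> p) p"
  define B where "B = dd W (\<eta> p) p"
  define A where "A = dd al (\<eta> p) p"
  define bb where "bb = dd be (\<eta> p) p"
  have w0: "w < 0" unfolding w_def using wp .
  have e3: "c * Hh + (bb + b * Th) = 0" using E3 unfolding bb_def .
  have e2: "a * w * Hh + h p * b * q = 0" using E2 unfolding q_def .
  have e4: "2 * b * bb + 2 * a * w * A + a * a * B = 0" using E4 unfolding bb_def A_def B_def .
  have e5: "A * (w * w) = q * w - a * w * B" using E5 unfolding A_def q_def B_def .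
  have s1: "Hh = - (S * h p * (bb + b * Th))" using e3 Sform by algebra
  have "h p * (b * q - a * w * S * (bb + b * Th)) = 0" using e2 s1 by algebra
  then have s2: "b * q - a * w * S * (bb + b * Th) = 0" using posp by simp
  have "b * (- (b * (bb + b * Th)) - a * q) = 0" using s2 b2 by algebra
  then have s3: "- (b * (bb + b * Th)) - a * q = 0" using bpos by simp
  have "w * (A * w + a * B - q) = 0" using e5 by algebra
  then have s4: "A * w + a * B - q = 0" using w0 by simp
  have s5: "2 * (b * b * Th) = - (a * a * B)" using s3 s4 e4 by algebra
  have "a * a * (2 * (S * w * Th) - B) = 0" using s5 b2 by algebra
  then have s6: "2 * (S * w * Th) = B" using apos by simp
  have STh: "S * Th = - B / (2 * - w)" using s6 w0 by (simp add: field_simps)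
  have xib: "\<xi>b p = (1 / N0) *\<^sub>R \<xi> p" unfolding \<xi>b_def normalize_field_def N0_def w_def W_def by simp
  have o: "quad (g p) (\<eta> p) (\<xi>b p) = 0" using eta pU by blast
  have nn: "quad (g p) (\<xi>b p) (\<xi>b p) = -1"
  proof -
    have "quad (g p) (\<xi>b p) (\<xi>b p) = (1 / N0) * (1 / N0) * w"
      unfolding xib quad_scale1 quad_scale2 w_def W_def by simp
    also have "\<dots> = w / (N0 * N0)" by simp
    also have "\<dots> = -1" unfolding N0sq using w0 by simp
    finally show ?thesis .
  qed
  have sh: "tensor_eval (\<lambda>\<mu> \<nu>. shear g \<eta> \<mu> \<nu> p) (\<xi>b p) (\<xi>b p)
     = quad (g p) (nab g \<eta> (\<xi>b p) p) (\<xi>b p) + Th / d"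
    using M.SHEAR[OF deta o nn] unfolding Th_def d_def .
  have qv: "quad (g p) (nab g \<eta> (\<xi>b p) p) (\<xi>b p) = B / (2 * - w)"
  proof -
    have "quad (g p) (nab g \<eta> (\<xi>b p) p) (\<xi>b p) = (1 / N0) * (1 / N0) * quad (g p) (nab g \<xi> (\<eta> p) p) (\<xi> p)"
      unfolding xib nab_scale quad_scale1 quad_scale2 liee by simp
    also have "quad (g p) (nab g \<xi> (\<eta> p) p) (\<xi> p) = B / 2" using ddW[of "\<eta> p"] unfolding B_def by simp
    also have "(1 / N0) * (1 / N0) * (B / 2) = B / (2 * (N0 * N0))" by simp
    finally show ?thesis unfolding N0sq .
  qed
  have sig: "tensor_eval (\<lambda>\<mu> \<nu>. shear g \<eta> \<mu> \<nu> p) (\<xi>b p) (\<xi>b p) = Th * (1 / d - S)"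
  proof -
    have qv2: "quad (g p) (nab g \<eta> (\<xi>b p) p) (\<xi>b p) = - (S * Th)"
      unfolding qv using s6 w0 by (simp add: field_simps)
    show ?thesis unfolding sh qv2 by (simp add: algebra_simps)
  qed
  have dpos: "d \<ge> 1" unfolding d_def using dim by simp
  have Th0: "Th \<noteq> 0" unfolding Th_def using expand .
  have "vs p = 1 / sqrt d \<longleftrightarrow> sqrt S = sqrt (1 / d)" unfolding vsS by (simp add: real_sqrt_divide)
  also have "\<dots> \<longleftrightarrow> S = 1 / d" by simp
  also have "\<dots> \<longleftrightarrow> Th * (1 / d - S) = 0" using Th0 by auto
  finally show ?thesis unfolding sig .

qed


end
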